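(* Let $0<\delta_1,\delta_2<1$. Every rate pair $(R_1,R_2)$ in the secret message capacity region $\mathcal{R}$ satisfies \[ \frac{R_1(1-\delta_2)}{\delta_2(1-\delta_1)(1-\delta_1\delta_2)}+\frac{R_1}{1-\delta_1}+\frac{R_2}{1-\delta_1\delta_2}\le L\log_2 q \quad\text{and}\quad \frac{R_2(1-\delta_1)}{\delta_1(1-\delta_2)(1-\delta_1\delta_2)}+\frac{R_1}{1-\delta_1\delta_2}+\frac{R_2}{1-\delta_2}\le L\log_2 q. \] Moreover, the same two inequalities hold if, in the definition of achievability, "secure against a malicious user" is replaced by the weaker requirement "secure against honest-but-curious users".
   Context: Channel model. A sender Alice transmits, at times $i=1,\dots,n$, packets $X_i\in\mathbb{F}_q^L$. Receiver Bob observes $Y_{1,i}$ and receiver Calvin observes $Y_{2,i}$, each in $\mathbb{F}_q^L\cup\{\perp\}$ ($\perp$ = erasure). The channel state $S_i\in\{B,C,BC,\emptyset\}$ records who received packet $i$; $S_1,S_2,\dots$ are i.i.d., independent of everything else, with Bob receiving with probability $1-\delta_1$ and Calvin with probability $1-\delta_2$, independently. $Y_{1,i}=X_i$ if Bob receives packet $i$, else $\perp$; similarly $Y_{2,i}$. After each transmission each receiver publicly, reliably and authentically acknowledges whether he received it (learning the other's acknowledgment for packet $i$ only after making his own); $S^\ast_i$ is the state as reported ($S^\ast_i=S_i$ under honest reporting). $V^i=(V_1,\dots,V_i)$. Alice, Bob, Calvin have independent private randomness $\Theta_A,\Theta_B,\Theta_C$. Logarithms base 2. Scheme. An $(n,\epsilon,N_1,N_2)$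 scheme: message sets $\mathbb{F}_q^{LN_1}$, $\mathbb{F}_q^{LN_2}$, encoders $X_i=f_i(W_1,W_2,\Theta_A,S^{\ast\,i-1})$, decoders $\hat W_1=\phi_1(Y_1^n)$, $\hat W_2=\phi_2(Y_2^n)$ with $\Pr\{\hat W_1\ne W_1\}<\epsilon$, $\Pr\{\hat W_2\ne W_2\}<\epsilon$ for arbitrary messages under honest acknowledgments. Secure against honest-but-curious users: additionally, when both are honest and $W_1,W_2$ independent uniform, $I(W_1;Y_2^nS^n\Theta_C)<\epsilon$ and $I(W_2;Y_1^nS^n\Theta_B)<\epsilon$. Secure against a malicious user: if Calvin is malicious (chooses the distribution of $W_1$ arbitrarily, with $W_2$ uniform, independent and not accessible to him, and sends arbitrary possibly randomized acknowledgments based on all information available to him at that time), then the reliability and secrecy conditions for $W_1$ still hold for honest Bob; symmetrically for malicious Bob. $(R_1,R_2)\in\mathbb{R}_+^2$ is achievable if for every $\epsilon,\epsilon'>0$ there exist $N_1,N_2,n$ and an $(n,\epsilon,N_1,N_2)$ scheme secure against a malicious user with $R_j-\epsilon'<\frac1nN_jL\log q$ for $j=1,2$. $\mathcal{R}$ is the set of achievable pairs. *)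

theory Defs
  imports "HOL-Probability.Probability" "HOL-Number_Theory.Prime_Powers"
begin

text \<open>
  Packets in F_q^L are encoded as natural numbers in {..<q^L}; messages in
  F_q^(L N_j) as natural numbers in {..<q^(L N_j)}.  (Encoders and decoders are
  arbitrary functions, so only the cardinalities of these sets matter.)
  An erasure is None, a received packet x is Some x.
  A channel state is a pair (b, c): b = Bob received, c = Calvin received.
  Private randomness Theta_A, Theta_B, Theta_C takes values in nat.
\<close>

type_synonym state = "bool \<times> bool"
type_synonym obs = "nat option"

text \<open>Record of one time slot: (true state S_i, reported state S*_i, packet X_i).\<close>
type_synonym slot = "state \<times> state \<times> nat"

text \<open>Encoder: time index i (0-based), W1, W2, Theta_A, reported states S*^(i-1).\<close>
type_synonym encoder = "nat \<Rightarrow> nat \<Rightarrow> nat \<Rightarrow> nat \<Rightarrow> state list \<Rightarrow> nat"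

text \<open>Acknowledgment strategy of a receiver: own private randomness, own
  observations Y^i up to and including the current slot, previously reported
  states S*^(i-1); returns a (possibly randomized) acknowledgment.\<close>
type_synonym ackstrat = "nat \<Rightarrow> obs list \<Rightarrow> state list \<Rightarrow> bool pmf"

definition honest_ack :: ackstrat where
  "honest_ack th ys ss = return_pmf (last ys \<noteq> None)"

definition obs1 :: "slot \<Rightarrow> obs" where
  "obs1 r = (if fst (fst r) then Some (snd (snd r)) else None)"
definition obs2 :: "slot \<Rightarrow> obs" where
  "obs2 r = (if snd (fst r) then Some (snd (snd r)) else None)"
definition true_state :: "slot \<Rightarrow> state" where
  "true_state r = fst r"
definition rep_state :: "slot \<Rightarrow> state" where
  "rep_state r = fst (snd r)"

definition step ::
  "real \<Rightarrow> real \<Rightarrow> encoder \<Rightarrow> nat \<Rightarrow> nat \<Rightarrow> nat \<Rightarrow> nat \<Rightarrow> nat \<Rightarrow>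
   ackstrat \<Rightarrow> ackstrat \<Rightarrow> nat \<Rightarrow> slot list \<Rightarrow> slot list pmf" where
  "step d1 d2 f w1 w2 tA tB tC aB aC i h =
     do { let x = f i w1 w2 tA (map rep_state h);
          b \<leftarrow> bernoulli_pmf (1 - d1);
          c \<leftarrow> bernoulli_pmf (1 - d2);
          let y1 = map obs1 h @ [if b then Some x else None];
          let y2 = map obs2 h @ [if c then Some x else None];
          b' \<leftarrow> aB tB y1 (map rep_state h);
          c' \<leftarrow> aC tC y2 (map rep_state h);
          return_pmf (h @ [((b, c), (b', c'), x)]) }"

fun run ::
  "real \<Rightarrow> real \<Rightarrow> encoder \<Rightarrow> nat \<Rightarrow> nat \<Rightarrow> nat \<Rightarrow> nat \<Rightarrow> nat \<Rightarrow>
   ackstrat \<Rightarrow> ackstrat \<Rightarrow> nat \<Rightarrow> slot list pmf" where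
  "run d1 d2 f w1 w2 tA tB tC aB aC 0 = return_pmf []"
| "run d1 d2 f w1 w2 tA tB tC aB aC (Suc i) =
     run d1 d2 f w1 w2 tA tB tC aB aC i \<bind> step d1 d2 f w1 w2 tA tB tC aB aC i"

type_synonym outcome = "nat \<times> nat \<times> nat \<times> nat \<times> nat \<times> slot list"

definition channel_exp ::
  "real \<Rightarrow> real \<Rightarrow> nat \<Rightarrow> encoder \<Rightarrow> nat pmf \<Rightarrow> nat pmf \<Rightarrow> nat pmf \<Rightarrow>
   nat pmf \<Rightarrow> nat pmf \<Rightarrow> ackstrat \<Rightarrow> ackstrat \<Rightarrow> outcome pmf" where
  "channel_exp d1 d2 n f PA PB PC PW1 PW2 aB aC =
     do { w1 \<leftarrow> PW1; w2 \<leftarrow> PW2; tA \<leftarrow> PA; tB \<leftarrow> PB; tC \<leftarrow> PC;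
          h \<leftarrow> run d1 d2 f w1 w2 tA tB tC aB aC n;
          return_pmf (w1, w2, tA, tB, tC, h) }"

definition W1_of :: "outcome \<Rightarrow> nat" where "W1_of \<omega> = fst \<omega>"
definition W2_of :: "outcome \<Rightarrow> nat" where "W2_of \<omega> = fst (snd \<omega>)"
definition thB_of :: "outcome \<Rightarrow> nat" where "thB_of \<omega> = fst (snd (snd (snd \<omega>)))"
definition thC_of :: "outcome \<Rightarrow> nat" where "thC_of \<omega> = fst (snd (snd (snd (snd \<omega>))))"
definition hist_of :: "outcome \<Rightarrow> slot list" where "hist_of \<omega> = snd (snd (snd (snd (snd \<omega>))))"
definition Y1_of :: "outcome \<Rightarrow> obs list" where "Y1_of \<omega> = map obs1 (hist_of \<omega>)"
definition Y2_of :: "outcome \<Rightarrow> obs list" where "Y2_of \<omega> = map obs2 (hist_of \<omega>)"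
definition S_of :: "outcome \<Rightarrow> state list" where "S_of \<omega> = map true_state (hist_of \<omega>)"
definition Sstar_of :: "outcome \<Rightarrow> state list" where "Sstar_of \<omega> = map rep_state (hist_of \<omega>)"

definition MI :: "'a pmf \<Rightarrow> ('a \<Rightarrow> 'b) \<Rightarrow> ('a \<Rightarrow> 'c) \<Rightarrow> real" where
  "MI P X Y = prob_space.mutual_information (measure_pmf P) 2 (count_space UNIV) (count_space UNIV) X Y"

definition msgs :: "nat \<Rightarrow> nat \<Rightarrow> nat \<Rightarrow> nat set" where
  "msgs q L N = {..< q ^ (L * N)}"

text \<open>An (n, eps, N1, N2) scheme (reliability under honest acknowledgments).
  PA, PB, PC are the distributions of Theta_A, Theta_B, Theta_C.\<close>
definition is_scheme ::
  "nat \<Rightarrow> nat \<Rightarrow> real \<Rightarrow> real \<Rightarrow> nat \<Rightarrow> real \<Rightarrow> nat \<Rightarrow> nat \<Rightarrow>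
   encoder \<Rightarrow> (obs list \<Rightarrow> nat) \<Rightarrow> (obs list \<Rightarrow> nat) \<Rightarrow> nat pmf \<Rightarrow> nat pmf \<Rightarrow> nat pmf \<Rightarrow> bool" where
  "is_scheme q L d1 d2 n eps N1 N2 f phi1 phi2 PA PB PC \<longleftrightarrow>
     (\<forall>i w1 w2 t s. f i w1 w2 t s < q ^ L) \<and>
     (\<forall>w1\<in>msgs q L N1. \<forall>w2\<in>msgs q L N2.
        let P = channel_exp d1 d2 n f PA PB PC (return_pmf w1) (return_pmf w2) honest_ack honest_ack
        in measure_pmf.prob P {\<omega>. phi1 (Y1_of \<omega>) \<noteq> W1_of \<omega>} < eps \<and>
           measure_pmf.prob P {\<omega>. phi2 (Y2_of \<omega>) \<noteq> W2_of \<omega>} < eps)"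

definition secure_hbc ::
  "nat \<Rightarrow> nat \<Rightarrow> real \<Rightarrow> real \<Rightarrow> nat \<Rightarrow> real \<Rightarrow> nat \<Rightarrow> nat \<Rightarrow>
   encoder \<Rightarrow> (obs list \<Rightarrow> nat) \<Rightarrow> (obs list \<Rightarrow> nat) \<Rightarrow> nat pmf \<Rightarrow> nat pmf \<Rightarrow> nat pmf \<Rightarrow> bool" where
  "secure_hbc q L d1 d2 n eps N1 N2 f phi1 phi2 PA PB PC \<longleftrightarrow>
     is_scheme q L d1 d2 n eps N1 N2 f phi1 phi2 PA PB PC \<and>
     (let P = channel_exp d1 d2 n f PA PB PC (pmf_of_set (msgs q L N1)) (pmf_of_set (msgs q L N2))
                honest_ack honest_ack
      in MI P W1_of (\<lambda>\<omega>. (Y2_of \<omega>, S_of \<omega>, thC_of \<omega>)) < eps \<and>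
         MI P W2_of (\<lambda>\<omega>. (Y1_of \<omega>, S_of \<omega>, thB_of \<omega>)) < eps)"

text \<open>Secure against a malicious user: for every malicious Calvin (choosing the
  distribution PW1 of W1 supported on the message set, and an arbitrary randomized
  acknowledgment strategy aC), with W2 uniform, reliability and secrecy of W1 hold
  for honest Bob; and symmetrically for a malicious Bob.\<close>
definition secure_mal ::
  "nat \<Rightarrow> nat \<Rightarrow> real \<Rightarrow> real \<Rightarrow> nat \<Rightarrow> real \<Rightarrow> nat \<Rightarrow> nat \<Rightarrow>
   encoder \<Rightarrow> (obs list \<Rightarrow> nat) \<Rightarrow> (obs list \<Rightarrow> nat) \<Rightarrow> nat pmf \<Rightarrow> nat pmf \<Rightarrow> nat pmf \<Rightarrow> bool" where
  "secure_mal q L d1 d2 n eps N1 N2 f phi1 phi2 PA PB PC \<longleftrightarrow>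
     is_scheme q L d1 d2 n eps N1 N2 f phi1 phi2 PA PB PC \<and>
     (\<forall>PW1 aC. set_pmf PW1 \<subseteq> msgs q L N1 \<longrightarrow>
        (let P = channel_exp d1 d2 n f PA PB PC PW1 (pmf_of_set (msgs q L N2)) honest_ack aC
         in measure_pmf.prob P {\<omega>. phi1 (Y1_of \<omega>) \<noteq> W1_of \<omega>} < eps \<and>
            MI P W1_of (\<lambda>\<omega>. (Y2_of \<omega>, Sstar_of \<omega>, thC_of \<omega>)) < eps)) \<and>
     (\<forall>PW2 aB. set_pmf PW2 \<subseteq> msgs q L N2 \<longrightarrow>
        (let P = channel_exp d1 d2 n f PA PB PC (pmf_of_set (msgs q L N1)) PW2 aB honest_ack
         in measure_pmf.prob P {\<omega>. phi2 (Y2_of \<omega>) \<noteq> W2_of \<omega>} < eps \<and>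
            MI P W2_of (\<lambda>\<omega>. (Y1_of \<omega>, Sstar_of \<omega>, thB_of \<omega>)) < eps))"

definition achievable ::
  "(nat \<Rightarrow> nat \<Rightarrow> real \<Rightarrow> real \<Rightarrow> nat \<Rightarrow> real \<Rightarrow> nat \<Rightarrow> nat \<Rightarrow>
    encoder \<Rightarrow> (obs list \<Rightarrow> nat) \<Rightarrow> (obs list \<Rightarrow> nat) \<Rightarrow> nat pmf \<Rightarrow> nat pmf \<Rightarrow> nat pmf \<Rightarrow> bool) \<Rightarrow>
   nat \<Rightarrow> nat \<Rightarrow> real \<Rightarrow> real \<Rightarrow> real \<times> real \<Rightarrow> bool" where
  "achievable sec q L d1 d2 R \<longleftrightarrow>
     0 \<le> fst R \<and> 0 \<le> snd R \<and>
     (\<forall>eps>0. \<forall>eps'>0. \<exists>N1 N2 n f phi1 phi2 PA PB PC.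
        n > 0 \<and> sec q L d1 d2 n eps N1 N2 f phi1 phi2 PA PB PC \<and>
        fst R - eps' < real N1 * real L * log 2 (real q) / real n \<and>
        snd R - eps' < real N2 * real L * log 2 (real q) / real n)"

definition cap_region :: "nat \<Rightarrow> nat \<Rightarrow> real \<Rightarrow> real \<Rightarrow> (real \<times> real) set" where
  "cap_region q L d1 d2 = {R. achievable secure_mal q L d1 d2 R}"

definition cap_region_hbc :: "nat \<Rightarrow> nat \<Rightarrow> real \<Rightarrow> real \<Rightarrow> (real \<times> real) set" where
  "cap_region_hbc q L d1 d2 = {R. achievable secure_hbc q L d1 d2 R}"

end

theory Submission
  imports Defs "HOL-Real_Asymp.Real_Asymp"
begin


definition ent :: "'a pmf \<Rightarrow> real" where
  "ent d = (\<Sum>x\<in>set_pmf d. - pmf d x * log 2 (pmf d x))"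

lemma pmf_pos_set: "x \<in> set_pmf d \<Longrightarrow> 0 < pmf d x"
  by (simp add: pmf_positive)

lemma ent_integral:
  assumes "finite (set_pmf d)"
  shows "ent d = - (\<integral>x. log 2 (pmf d x) \<partial>measure_pmf d)"
proof -
  have "(\<integral>x. log 2 (pmf d x) \<partial>measure_pmf d) = (\<Sum>a\<in>set_pmf d. log 2 (pmf d a) * pmf d a)"
    by (rule integral_measure_pmf_real) (use assms in auto)
  then show ?thesis unfolding ent_def by (simp add: sum_negf[symmetric] mult.commute)
qed

lemma gibbs:
  assumes fin: "finite (set_pmf p)" and rpos: "\<And>x. x \<in> set_pmf p \<Longrightarrow> 0 < r x"
    and rsum: "(\<Sum>x\<in>set_pmf p. r x) \<le> 1"
  shows "(\<Sum>x\<in>set_pmf p. pmf p x * log 2 (r x / pmf p x)) \<le> 0"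
proof -
  have "(\<Sum>x\<in>set_pmf p. pmf p x * ln (r x / pmf p x)) \<le> (\<Sum>x\<in>set_pmf p. pmf p x * (r x / pmf p x - 1))"
    by (intro sum_mono mult_left_mono ln_le_minus_one) (auto intro: rpos pmf_pos_set divide_pos_pos)
  also have "\<dots> = (\<Sum>x\<in>set_pmf p. r x) - (\<Sum>x\<in>set_pmf p. pmf p x)"
    by (auto simp: sum_subtractf[symmetric] field_simps dest: pmf_pos_set intro!: sum.cong)
  also have "(\<Sum>x\<in>set_pmf p. pmf p x) = 1" by (rule sum_pmf_eq_1) (use fin in auto)
  finally have "(\<Sum>x\<in>set_pmf p. pmf p x * ln (r x / pmf p x)) \<le> 0" using rsum by simp
  then have "(\<Sum>x\<in>set_pmf p. pmf p x * ln (r x / pmf p x)) / ln 2 \<le> 0"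
    by (simp add: divide_nonpos_pos)
  then show ?thesis by (simp add: log_def sum_divide_distrib)
qed

lemma ent_le_log_card:
  assumes B: "finite B" "set_pmf d \<subseteq> B"
  shows "ent d \<le> log 2 (card B)"
proof -
  have fin: "finite (set_pmf d)" using B finite_subset by blast
  have ne: "B \<noteq> {}" using B set_pmf_not_empty[of d] by blast
  then have cB: "card B > 0" using B by (simp add: card_gt_0_iff)
  have "(\<Sum>x\<in>set_pmf d. (1 / card B)) \<le> 1"
    using card_mono[OF B] cB by (simp add: field_simps)
  from gibbs[OF fin _ this] cB
  have g: "(\<Sum>x\<in>set_pmf d. pmf d x * log 2 ((1 / card B) / pmf d x)) \<le> 0" by simp
  have "(\<Sum>x\<in>set_pmf d. pmf d x * log 2 ((1 / card B) / pmf d x))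
     = (\<Sum>x\<in>set_pmf d. - pmf d x * log 2 (card B) - pmf d x * log 2 (pmf d x))"
  proof (intro sum.cong refl)
    fix x assume x: "x \<in> set_pmf d"
    have p: "pmf d x > 0" using pmf_pos_set[OF x] .
    show "pmf d x * log 2 ((1 / card B) / pmf d x) = - pmf d x * log 2 (card B) - pmf d x * log 2 (pmf d x)"
      using p cB by (simp add: log_divide log_recip log_mult algebra_simps)
  qed
  also have "\<dots> = - (\<Sum>x\<in>set_pmf d. pmf d x) * log 2 (card B) - (\<Sum>x\<in>set_pmf d. pmf d x * log 2 (pmf d x))"
    by (simp add: sum_subtractf sum_distrib_right sum_negf)
  also have "(\<Sum>x\<in>set_pmf d. pmf d x) = 1" by (rule sum_pmf_eq_1) (use fin in auto)
  finally show ?thesis using g unfolding ent_def by (simp add: sum_negf)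
qed

lemma ent_map_inj:
  assumes "inj_on g (set_pmf d)"
  shows "ent (map_pmf g d) = ent d"
  unfolding ent_def set_map_pmf
  by (subst sum.reindex[OF assms]) (simp add: pmf_map_inj[OF assms])

lemma ent_return [simp]: "ent (return_pmf x) = 0"
  by (simp add: ent_def)

lemma ent_map_le:
  assumes fin: "finite (set_pmf d)"
  shows "ent (map_pmf g d) \<le> ent d"
proof -
  have fin2: "finite (set_pmf (map_pmf g d))" using fin by simp
  have "ent (map_pmf g d) = - (\<integral>x. log 2 (pmf (map_pmf g d) (g x)) \<partial>measure_pmf d)"
    by (simp add: ent_integral[OF fin2] integral_map_pmf)
  moreover have "(\<integral>x. log 2 (pmf d x) \<partial>measure_pmf d) \<le> (\<integral>x. log 2 (pmf (map_pmf g d) (g x)) \<partial>measure_pmf d)"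
  proof (rule integral_mono_AE)
    show "integrable (measure_pmf d) (\<lambda>x. log 2 (pmf d x))" by (rule integrable_measure_pmf_finite[OF fin])
    show "integrable (measure_pmf d) (\<lambda>x. log 2 (pmf (map_pmf g d) (g x)))" by (rule integrable_measure_pmf_finite[OF fin])
    show "AE x in measure_pmf d. log 2 (pmf d x) \<le> log 2 (pmf (map_pmf g d) (g x))"
    proof (rule AE_pmfI)
      fix x assume x: "x \<in> set_pmf d"
      have "pmf d x = measure_pmf.prob d {x}" by (simp add: measure_pmf_single)
      also have "\<dots> \<le> measure_pmf.prob d (g -` {g x})" by (rule measure_pmf.finite_measure_mono) auto
      also have "\<dots> = pmf (map_pmf g d) (g x)" by (simp add: pmf_map)
      finally show "log 2 (pmf d x) \<le> log 2 (pmf (map_pmf g d) (g x))"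
        using pmf_pos_set[OF x] by simp
    qed
  qed
  ultimately show ?thesis using ent_integral[OF fin] by simp
qed

lemma ent_pair:
  assumes fa: "finite (set_pmf A)" and fb: "finite (set_pmf B)"
  shows "ent (pair_pmf A B) = ent A + ent B"
proof -
  have fin: "finite (set_pmf (pair_pmf A B))" using fa fb by simp
  have "(\<integral>z. log 2 (pmf (pair_pmf A B) z) \<partial>measure_pmf (pair_pmf A B))
      = (\<integral>z. log 2 (pmf A (fst z)) + log 2 (pmf B (snd z)) \<partial>measure_pmf (pair_pmf A B))"
    by (intro integral_cong_AE AE_pmfI) (auto simp: pmf_pair log_mult set_pmf_iff)
  also have "\<dots> = (\<integral>z. log 2 (pmf A (fst z)) \<partial>measure_pmf (pair_pmf A B)) + (\<integral>z. log 2 (pmf B (snd z)) \<partial>measure_pmf (pair_pmf A B))"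
    by (intro Bochner_Integration.integral_add integrable_measure_pmf_finite fin)
  also have "(\<integral>z. log 2 (pmf A (fst z)) \<partial>measure_pmf (pair_pmf A B)) = (\<integral>x. log 2 (pmf A x) \<partial>measure_pmf (map_pmf fst (pair_pmf A B)))"
    by (rule integral_map_pmf[symmetric])
  also have "\<dots> = (\<integral>x. log 2 (pmf A x) \<partial>measure_pmf A)" by (simp only: map_fst_pair_pmf)
  also have "(\<integral>z. log 2 (pmf B (snd z)) \<partial>measure_pmf (pair_pmf A B)) = (\<integral>x. log 2 (pmf B x) \<partial>measure_pmf (map_pmf snd (pair_pmf A B)))"
    by (rule integral_map_pmf[symmetric])
  also have "\<dots> = (\<integral>x. log 2 (pmf B x) \<partial>measure_pmf B)" by (simp only: map_snd_pair_pmf)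
  finally show ?thesis using ent_integral[OF fa] ent_integral[OF fb] ent_integral[OF fin] by simp
qed

lemma ent_uniform:
  assumes "finite S" "S \<noteq> {}"
  shows "ent (pmf_of_set S) = log 2 (card S)"
proof -
  have c: "card S > 0" using assms by (simp add: card_gt_0_iff)
  have "ent (pmf_of_set S) = (\<Sum>x\<in>S. - (1 / card S) * log 2 (1 / card S))"
    unfolding ent_def using assms by (intro sum.cong) auto
  also have "\<dots> = log 2 (card S)" using c by (simp add: log_recip)
  finally show ?thesis .
qed


lemma ent_map_sum:
  assumes fin: "finite (set_pmf d)"
  shows "ent (map_pmf g d) = - (\<Sum>z\<in>set_pmf d. pmf d z * log 2 (pmf (map_pmf g d) (g z)))"
proof -
  have fin2: "finite (set_pmf (map_pmf g d))" using fin by simp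
  have "ent (map_pmf g d) = - (\<integral>x. log 2 (pmf (map_pmf g d) (g x)) \<partial>measure_pmf d)"
    by (simp add: ent_integral[OF fin2])
  also have "(\<integral>x. log 2 (pmf (map_pmf g d) (g x)) \<partial>measure_pmf d) = (\<Sum>z\<in>set_pmf d. log 2 (pmf (map_pmf g d) (g z)) * pmf d z)"
    by (rule integral_measure_pmf_real) (use fin in auto)
  finally show ?thesis by (simp add: mult.commute)
qed

lemma ent_sum: "finite (set_pmf d) \<Longrightarrow> ent d = - (\<Sum>z\<in>set_pmf d. pmf d z * log 2 (pmf d z))"
  unfolding ent_def by (simp add: sum_negf)

lemma marginal_sum:
  assumes fin: "finite SB" and sub: "snd ` set_pmf e \<subseteq> SB"
  shows "pmf (map_pmf fst e) a = (\<Sum>b\<in>SB. pmf e (a, b))"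
proof -
  have "pmf (map_pmf fst e) a = measure_pmf.prob e (fst -` {a})" by (simp add: pmf_map)
  also have "\<dots> = measure_pmf.prob e ((fst -` {a}) \<inter> set_pmf e)" by (simp add: measure_Int_set_pmf)
  also have "(fst -` {a}) \<inter> set_pmf e = (Pair a ` SB) \<inter> set_pmf e" using sub by force
  also have "measure_pmf.prob e ((Pair a ` SB) \<inter> set_pmf e) = measure_pmf.prob e (Pair a ` SB)"
    by (simp add: measure_Int_set_pmf)
  also have "\<dots> = sum (pmf e) (Pair a ` SB)" using fin by (simp add: measure_measure_pmf_finite)
  also have "\<dots> = (\<Sum>b\<in>SB. pmf e (a, b))" by (subst sum.reindex) (auto simp: inj_on_def)
  finally show ?thesis .
qed

lemma submod:
  fixes d :: "('x \<times> 'a \<times> 'b) pmf"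
  assumes fin: "finite (set_pmf d)"
  shows "ent d + ent (map_pmf (\<lambda>(x,a,b). a) d)
       \<le> ent (map_pmf (\<lambda>(x,a,b). (x,a)) d) + ent (map_pmf (\<lambda>(x,a,b). (a,b)) d)"
proof -
  define XA where "XA = map_pmf (\<lambda>(x,a,b). (x,a)) d"
  define AB where "AB = map_pmf (\<lambda>(x,a,b). (a,b)) d"
  define A where "A = map_pmf (\<lambda>(x,a,b). a) d"
  define r where "r = (\<lambda>(x,a,b). pmf XA (x,a) * pmf AB (a,b) / pmf A a)"
  have posXA: "pmf XA (x,a) > 0" if "(x,a,b) \<in> set_pmf d" for x a b
    using that unfolding XA_def by (intro pmf_pos_set) force
  have posAB: "pmf AB (a,b) > 0" if "(x,a,b) \<in> set_pmf d" for x a b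
    using that unfolding AB_def by (intro pmf_pos_set) force
  have posA: "pmf A a > 0" if "(x,a,b) \<in> set_pmf d" for x a b
    using that unfolding A_def by (intro pmf_pos_set) force
  have rpos: "\<And>z. z \<in> set_pmf d \<Longrightarrow> 0 < r z"
    unfolding r_def using posXA posAB posA by (auto intro!: divide_pos_pos mult_pos_pos)
  define SB where "SB = (\<lambda>(x,a,b). b) ` set_pmf d"
  have finSB: "finite SB" unfolding SB_def using fin by simp
  have finXA: "finite (set_pmf XA)" unfolding XA_def using fin by simp
  have sub: "set_pmf d \<subseteq> (\<lambda>((x,a),b). (x,a,b)) ` (set_pmf XA \<times> SB)"
  proof
    fix z assume z: "z \<in> set_pmf d"
    obtain x a b where zz: "z = (x,a,b)" by (cases z) auto
    have "(x,a) \<in> set_pmf XA" unfolding XA_def using z zz by force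
    moreover have "b \<in> SB" unfolding SB_def using z zz by force
    ultimately show "z \<in> (\<lambda>((x,a),b). (x,a,b)) ` (set_pmf XA \<times> SB)" using zz by force
  qed
  have rnn: "0 \<le> r z" for z unfolding r_def by (auto split: prod.splits)
  have "(\<Sum>z\<in>set_pmf d. r z) \<le> (\<Sum>z\<in>(\<lambda>((x,a),b). (x,a,b)) ` (set_pmf XA \<times> SB). r z)"
    by (rule sum_mono2) (use sub finXA finSB rnn in auto)
  also have "\<dots> = (\<Sum>w\<in>set_pmf XA \<times> SB. r ((\<lambda>((x,a),b). (x,a,b)) w))"
    by (subst sum.reindex) (auto simp: inj_on_def comp_def)
  also have "\<dots> = (\<Sum>p\<in>set_pmf XA. \<Sum>b\<in>SB. r ((\<lambda>((x,a),b). (x,a,b)) (p,b)))"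
    by (subst sum.cartesian_product) (simp add: case_prod_unfold)
  also have "\<dots> = (\<Sum>p\<in>set_pmf XA. pmf XA p)"
  proof (rule sum.cong[OF refl])
    fix p assume p: "p \<in> set_pmf XA"
    obtain x a where pp: "p = (x,a)" by (cases p) auto
    have aA: "a \<in> set_pmf A" using p pp unfolding XA_def A_def by force
    have mA: "map_pmf fst AB = A" unfolding AB_def A_def by (simp add: pmf.map_comp comp_def case_prod_unfold)
    have sAB: "snd ` set_pmf AB \<subseteq> SB" unfolding AB_def SB_def by force
    have "(\<Sum>b\<in>SB. pmf AB (a,b)) = pmf A a"
      using marginal_sum[OF finSB sAB, of a] mA by simp
    then have "(\<Sum>b\<in>SB. pmf XA (x,a) * pmf AB (a,b) / pmf A a) = pmf XA (x,a)"
      using pmf_pos_set[OF aA] by (simp add: sum_divide_distrib[symmetric] sum_distrib_left[symmetric])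
    then show "(\<Sum>b\<in>SB. r ((\<lambda>((x,a),b). (x,a,b)) (p,b))) = pmf XA p"
      using pp unfolding r_def by simp
  qed
  also have "\<dots> = 1" by (rule sum_pmf_eq_1) (use finXA in auto)
  finally have rsum: "(\<Sum>z\<in>set_pmf d. r z) \<le> 1" .
  have g: "(\<Sum>z\<in>set_pmf d. pmf d z * log 2 (r z / pmf d z)) \<le> 0"
    by (rule gibbs[OF fin rpos rsum])
  have eq: "(\<Sum>z\<in>set_pmf d. pmf d z * log 2 (r z / pmf d z))
     = - ent (map_pmf (\<lambda>(x,a,b). (x,a)) d) - ent (map_pmf (\<lambda>(x,a,b). (a,b)) d)
       + ent d + ent (map_pmf (\<lambda>(x,a,b). a) d)"
  proof -
    have "(\<Sum>z\<in>set_pmf d. pmf d z * log 2 (r z / pmf d z))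
      = (\<Sum>z\<in>set_pmf d. pmf d z * log 2 (pmf XA ((\<lambda>(x,a,b). (x,a)) z))
          + pmf d z * log 2 (pmf AB ((\<lambda>(x,a,b). (a,b)) z))
          - pmf d z * log 2 (pmf A ((\<lambda>(x,a,b). a) z)) - pmf d z * log 2 (pmf d z))"
    proof (rule sum.cong[OF refl])
      fix z assume z: "z \<in> set_pmf d"
      obtain x a b where zz: "z = (x,a,b)" by (cases z) auto
      have p: "pmf d z > 0" using pmf_pos_set[OF z] .
      show "pmf d z * log 2 (r z / pmf d z) = pmf d z * log 2 (pmf XA ((\<lambda>(x,a,b). (x,a)) z))
          + pmf d z * log 2 (pmf AB ((\<lambda>(x,a,b). (a,b)) z))
          - pmf d z * log 2 (pmf A ((\<lambda>(x,a,b). a) z)) - pmf d z * log 2 (pmf d z)"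
        using posXA[of x a b] posAB[of x a b] posA[of x a b] z zz p
        by (simp add: r_def log_divide log_mult algebra_simps)
    qed
    also have "\<dots> = - ent (map_pmf (\<lambda>(x,a,b). (x,a)) d) - ent (map_pmf (\<lambda>(x,a,b). (a,b)) d)
       + ent d + ent (map_pmf (\<lambda>(x,a,b). a) d)"
      unfolding ent_map_sum[OF fin] ent_sum[OF fin] XA_def AB_def A_def
      by (simp add: sum.distrib sum_subtractf)
    finally show ?thesis .
  qed
  show ?thesis using g eq by simp
qed


definition HH :: "'o pmf \<Rightarrow> ('o \<Rightarrow> 'x) \<Rightarrow> real" where
  "HH p X = ent (map_pmf X p)"

lemma HH_cong: "(\<And>\<omega>. \<omega> \<in> set_pmf p \<Longrightarrow> X \<omega> = Y \<omega>) \<Longrightarrow> HH p X = HH p Y"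
  unfolding HH_def by (metis map_pmf_cong)

lemma HH_inj: "inj g \<Longrightarrow> HH p (\<lambda>\<omega>. g (X \<omega>)) = HH p X"
proof -
  assume g: "inj g"
  have "map_pmf (\<lambda>\<omega>. g (X \<omega>)) p = map_pmf g (map_pmf X p)" by (simp add: map_pmf_comp)
  then show ?thesis unfolding HH_def using ent_map_inj[of g "map_pmf X p"] g by (simp add: inj_on_def inj_def)
qed

lemma HH_inj_on: "inj_on g (X ` set_pmf p) \<Longrightarrow> HH p (\<lambda>\<omega>. g (X \<omega>)) = HH p X"
proof -
  assume g: "inj_on g (X ` set_pmf p)"
  have "map_pmf (\<lambda>\<omega>. g (X \<omega>)) p = map_pmf g (map_pmf X p)" by (simp add: map_pmf_comp)
  then show ?thesis unfolding HH_def using ent_map_inj[of g "map_pmf X p"] g by simp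
qed

lemma HH_mono: "finite (set_pmf p) \<Longrightarrow> HH p (\<lambda>\<omega>. g (X \<omega>)) \<le> HH p X"
proof -
  assume f: "finite (set_pmf p)"
  have "map_pmf (\<lambda>\<omega>. g (X \<omega>)) p = map_pmf g (map_pmf X p)" by (simp add: map_pmf_comp)
  then show ?thesis unfolding HH_def using ent_map_le[of "map_pmf X p" g] f by simp
qed

lemma HH_const [simp]: "HH p (\<lambda>\<omega>. c) = 0"
  unfolding HH_def by (simp add: map_pmf_const)

lemma HH_le_card: "finite B \<Longrightarrow> (\<And>\<omega>. \<omega> \<in> set_pmf p \<Longrightarrow> X \<omega> \<in> B) \<Longrightarrow> HH p X \<le> log 2 (card B)"
  unfolding HH_def by (rule ent_le_log_card) auto

lemma HH_submod:
  assumes fin: "finite (set_pmf p)"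
  shows "HH p (\<lambda>\<omega>. (X \<omega>, A \<omega>, B \<omega>)) + HH p A \<le> HH p (\<lambda>\<omega>. (X \<omega>, A \<omega>)) + HH p (\<lambda>\<omega>. (A \<omega>, B \<omega>))"
proof -
  let ?d = "map_pmf (\<lambda>\<omega>. (X \<omega>, A \<omega>, B \<omega>)) p"
  have "finite (set_pmf ?d)" using fin by simp
  from submod[OF this] show ?thesis unfolding HH_def map_pmf_comp by (simp add: o_def)
qed

lemma cond_mono:
  assumes fin: "finite (set_pmf p)" and V: "\<And>\<omega>. \<omega> \<in> set_pmf p \<Longrightarrow> V \<omega> = g (Z \<omega>)"
  shows "HH p (\<lambda>\<omega>. (X \<omega>, Z \<omega>)) - HH p Z \<le> HH p (\<lambda>\<omega>. (X \<omega>, V \<omega>)) - HH p V"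
proof -
  have s: "HH p (\<lambda>\<omega>. (X \<omega>, V \<omega>, Z \<omega>)) + HH p V \<le> HH p (\<lambda>\<omega>. (X \<omega>, V \<omega>)) + HH p (\<lambda>\<omega>. (V \<omega>, Z \<omega>))"
    by (rule HH_submod[OF fin])
  have e1: "HH p (\<lambda>\<omega>. (X \<omega>, V \<omega>, Z \<omega>)) = HH p (\<lambda>\<omega>. (X \<omega>, Z \<omega>))"
  proof -
    have "HH p (\<lambda>\<omega>. (X \<omega>, V \<omega>, Z \<omega>)) = HH p (\<lambda>\<omega>. (\<lambda>(x,z). (x, g z, z)) (X \<omega>, Z \<omega>))"
      by (rule HH_cong) (simp add: V)
    also have "\<dots> = HH p (\<lambda>\<omega>. (X \<omega>, Z \<omega>))" by (rule HH_inj) (auto simp: inj_def)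
    finally show ?thesis .
  qed
  have e2: "HH p (\<lambda>\<omega>. (V \<omega>, Z \<omega>)) = HH p Z"
  proof -
    have "HH p (\<lambda>\<omega>. (V \<omega>, Z \<omega>)) = HH p (\<lambda>\<omega>. (\<lambda>z. (g z, z)) (Z \<omega>))"
      by (rule HH_cong) (simp add: V)
    also have "\<dots> = HH p Z" by (rule HH_inj) (auto simp: inj_def)
    finally show ?thesis .
  qed
  show ?thesis using s e1 e2 by simp
qed

lemma subadd:
  assumes fin: "finite (set_pmf p)"
  shows "HH p (\<lambda>\<omega>. (X \<omega>, A \<omega>)) - HH p A \<le> HH p X"
proof -
  have "HH p (\<lambda>\<omega>. (X \<omega>, A \<omega>)) - HH p A \<le> HH p (\<lambda>\<omega>. (X \<omega>, ())) - HH p (\<lambda>\<omega>. ())"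
    by (rule cond_mono[OF fin]) auto
  also have "HH p (\<lambda>\<omega>. (X \<omega>, ())) = HH p X" by (rule HH_inj[of "\<lambda>x. (x, ())", simplified]) (auto simp: inj_def)
  finally show ?thesis by simp
qed

lemma HH_pair_indep:
  assumes "map_pmf (\<lambda>\<omega>. (X \<omega>, Y \<omega>)) p = pair_pmf A B" "finite (set_pmf A)" "finite (set_pmf B)"
  shows "HH p (\<lambda>\<omega>. (X \<omega>, Y \<omega>)) = ent A + ent B"
  unfolding HH_def assms(1) by (rule ent_pair[OF assms(2,3)])


lemma pmf_label:
  assumes "e \<in> set_pmf E"
  shows "pmf (E \<bind> (\<lambda>e. map_pmf (\<lambda>z. (e, F e z)) D)) (e, y) = pmf E e * pmf (map_pmf (F e) D) y"
proof -
  have inner: "pmf (map_pmf (\<lambda>z. (e', F e' z)) D) (e, y) = (if e' = e then pmf (map_pmf (F e) D) y else 0)" for e'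
  proof (cases "e' = e")
    case True
    then show ?thesis by (simp add: pmf_map vimage_def)
  next
    case False
    then have "(\<lambda>z. (e', F e' z)) -` {(e, y)} = {}" by auto
    then show ?thesis using False by (simp add: pmf_map)
  qed
  have "pmf (E \<bind> (\<lambda>e. map_pmf (\<lambda>z. (e, F e z)) D)) (e, y)
      = (\<integral>e'. (if e' = e then pmf (map_pmf (F e) D) y else 0) \<partial>measure_pmf E)"
    by (simp add: pmf_bind inner)
  also have "\<dots> = (\<Sum>a\<in>{e}. (if a = e then pmf (map_pmf (F e) D) y else 0) * pmf E a)"
    by (rule integral_measure_pmf_real) (auto split: if_splits)
  finally show ?thesis by simp
qed

lemma ent_label:
  assumes fD: "finite (set_pmf D)" and fE: "finite (set_pmf E)"
  shows "ent (E \<bind> (\<lambda>e. map_pmf (\<lambda>z. (e, F e z)) D))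
       = ent E + (\<Sum>e\<in>set_pmf E. pmf E e * ent (map_pmf (F e) D))"
proof -
  let ?Z = "E \<bind> (\<lambda>e. map_pmf (\<lambda>z. (e, F e z)) D)"
  have setZ: "set_pmf ?Z = Sigma (set_pmf E) (\<lambda>e. set_pmf (map_pmf (F e) D))"
    by (auto simp: set_bind_pmf)
  have finG: "\<And>e. finite (set_pmf (map_pmf (F e) D))" using fD by simp
  have sumG: "\<And>e. (\<Sum>y\<in>set_pmf (map_pmf (F e) D). pmf (map_pmf (F e) D) y) = 1"
    by (rule sum_pmf_eq_1) (use finG in auto)
  have "ent ?Z = (\<Sum>p\<in>Sigma (set_pmf E) (\<lambda>e. set_pmf (map_pmf (F e) D)). - pmf ?Z p * log 2 (pmf ?Z p))"
    unfolding ent_def setZ ..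
  also have "\<dots> = (\<Sum>e\<in>set_pmf E. \<Sum>y\<in>set_pmf (map_pmf (F e) D). - pmf ?Z (e,y) * log 2 (pmf ?Z (e,y)))"
    by (subst sum.Sigma) (use fE finG in \<open>auto simp: case_prod_unfold\<close>)
  also have "\<dots> = (\<Sum>e\<in>set_pmf E. \<Sum>y\<in>set_pmf (map_pmf (F e) D).
       - pmf E e * log 2 (pmf E e) * pmf (map_pmf (F e) D) y
       + pmf E e * (- pmf (map_pmf (F e) D) y * log 2 (pmf (map_pmf (F e) D) y)))"
  proof (intro sum.cong refl)
    fix e y assume e: "e \<in> set_pmf E" and y: "y \<in> set_pmf (map_pmf (F e) D)"
    have pe: "pmf E e > 0" using pmf_pos_set[OF e] .
    have py: "pmf (map_pmf (F e) D) y > 0" using pmf_pos_set[OF y] .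
    show "- pmf ?Z (e,y) * log 2 (pmf ?Z (e,y)) = - pmf E e * log 2 (pmf E e) * pmf (map_pmf (F e) D) y
       + pmf E e * (- pmf (map_pmf (F e) D) y * log 2 (pmf (map_pmf (F e) D) y))"
      unfolding pmf_label[OF e] using pe py by (simp add: log_mult algebra_simps)
  qed
  also have "\<dots> = (\<Sum>e\<in>set_pmf E. - pmf E e * log 2 (pmf E e) * (\<Sum>y\<in>set_pmf (map_pmf (F e) D). pmf (map_pmf (F e) D) y)
       + pmf E e * ent (map_pmf (F e) D))"
  proof (intro sum.cong refl)
    fix e
    show "(\<Sum>y\<in>set_pmf (map_pmf (F e) D).
       - pmf E e * log 2 (pmf E e) * pmf (map_pmf (F e) D) y
       + pmf E e * (- pmf (map_pmf (F e) D) y * log 2 (pmf (map_pmf (F e) D) y)))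
     = - pmf E e * log 2 (pmf E e) * (\<Sum>y\<in>set_pmf (map_pmf (F e) D). pmf (map_pmf (F e) D) y)
       + pmf E e * ent (map_pmf (F e) D)"
      unfolding ent_def by (simp only: sum.distrib sum_distrib_left)
  qed
  also have "\<dots> = ent E + (\<Sum>e\<in>set_pmf E. pmf E e * ent (map_pmf (F e) D))"
    unfolding sumG ent_def[of E] by (simp add: sum.distrib[symmetric] algebra_simps)
  finally show ?thesis .
qed


lemma sum_pmf_indicator:
  assumes "finite (set_pmf d)"
  shows "(\<Sum>z\<in>set_pmf d. pmf d z * (if z \<in> S then 1 else 0)) = measure_pmf.prob d S"
proof -
  have "measure_pmf.prob d S = measure_pmf.prob d (S \<inter> set_pmf d)" by (simp add: measure_Int_set_pmf)
  also have "\<dots> = sum (pmf d) (S \<inter> set_pmf d)" using assms by (simp add: measure_measure_pmf_finite)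
  also have "\<dots> = (\<Sum>z\<in>set_pmf d. if z \<in> S then pmf d z else 0)"
    using assms by (subst Int_commute) (simp add: sum.inter_restrict)
  finally show ?thesis by (simp add: if_distrib cong: if_cong)
qed

lemma fano:
  fixes W V :: "'a \<Rightarrow> 'b"
  assumes fin: "finite (set_pmf p)" and M: "finite M" "M \<noteq> {}" and WM: "\<And>\<omega>. \<omega> \<in> set_pmf p \<Longrightarrow> W \<omega> \<in> M"
    and err: "measure_pmf.prob p {\<omega>. V \<omega> \<noteq> W \<omega>} \<le> eps" and e0: "0 < eps" and e1: "eps < 1"
  shows "HH p (\<lambda>\<omega>. (W \<omega>, V \<omega>)) - HH p V \<le> - log 2 (1 - eps) - eps * log 2 eps + eps * log 2 (card M)"
proof -
  define d where "d = map_pmf (\<lambda>\<omega>. (W \<omega>, V \<omega>)) p"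
  define pV where "pV = map_pmf V p"
  define c where "c = real (card M)"
  have c1: "c \<ge> 1" unfolding c_def using M by (simp add: Suc_leI card_gt_0_iff)
  define q where "q = (\<lambda>(w::'b,v::'b). if w = v then 1 - eps else eps / c)"
  define r where "r = (\<lambda>z. pmf pV (snd z) * q z)"
  have fd: "finite (set_pmf d)" unfolding d_def using fin by simp
  have qpos: "q z > 0" for z unfolding q_def using e0 e1 c1 by (auto split: prod.splits)
  have vin: "snd z \<in> set_pmf pV" if "z \<in> set_pmf d" for z using that unfolding d_def pV_def by auto
  have rpos: "\<And>z. z \<in> set_pmf d \<Longrightarrow> 0 < r z"
    unfolding r_def using qpos vin pmf_pos_set by (meson mult_pos_pos)
  have fV: "finite (set_pmf pV)" unfolding pV_def using fin by simp
  have subd: "set_pmf d \<subseteq> M \<times> set_pmf pV" unfolding d_def pV_def using WM by auto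
  have rnn: "r z \<ge> 0" for z unfolding r_def using qpos[of z] by simp
  have qsum: "(\<Sum>w\<in>M. q (w, v)) \<le> 1" for v
  proof -
    have "(\<Sum>w\<in>M. q (w, v)) \<le> (\<Sum>w\<in>M. eps / c + (if w = v then 1 - eps else 0))"
      by (rule sum_mono) (use e0 c1 in \<open>auto simp: q_def\<close>)
    also have "\<dots> = eps + (if v \<in> M then 1 - eps else 0)"
      using c1 by (simp add: sum.distrib c_def M)
    also have "\<dots> \<le> 1" using e1 by simp
    finally show ?thesis .
  qed
  have "(\<Sum>z\<in>set_pmf d. r z) \<le> (\<Sum>z\<in>M \<times> set_pmf pV. r z)"
    by (rule sum_mono2) (use subd M fV rnn in auto)
  also have "\<dots> = (\<Sum>w\<in>M. \<Sum>v\<in>set_pmf pV. r (w, v))" by (simp add: sum.cartesian_product)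
  also have "\<dots> = (\<Sum>v\<in>set_pmf pV. pmf pV v * (\<Sum>w\<in>M. q (w, v)))"
    unfolding r_def by (subst sum.swap) (simp add: sum_distrib_left)
  also have "\<dots> \<le> (\<Sum>v\<in>set_pmf pV. pmf pV v * 1)"
    by (intro sum_mono mult_left_mono qsum) auto
  also have "\<dots> = 1" by (simp add: sum_pmf_eq_1 fV)
  finally have rsum: "(\<Sum>z\<in>set_pmf d. r z) \<le> 1" .
  have g: "(\<Sum>z\<in>set_pmf d. pmf d z * log 2 (r z / pmf d z)) \<le> 0" by (rule gibbs[OF fd rpos rsum])
  have "(\<Sum>z\<in>set_pmf d. pmf d z * log 2 (r z / pmf d z))
      = (\<Sum>z\<in>set_pmf d. pmf d z * log 2 (pmf pV (snd z))) + (\<Sum>z\<in>set_pmf d. pmf d z * log 2 (q z))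
        - (\<Sum>z\<in>set_pmf d. pmf d z * log 2 (pmf d z))"
    unfolding sum.distrib[symmetric] sum_subtractf[symmetric]
  proof (rule sum.cong[OF refl])
    fix z assume z: "z \<in> set_pmf d"
    have "pmf pV (snd z) > 0" using pmf_pos_set[OF vin[OF z]] .
    then show "pmf d z * log 2 (r z / pmf d z) = pmf d z * log 2 (pmf pV (snd z)) + pmf d z * log 2 (q z) - pmf d z * log 2 (pmf d z)"
      using qpos[of z] pmf_pos_set[OF z] by (simp add: r_def log_divide log_mult algebra_simps)
  qed
  moreover have "HH p (\<lambda>\<omega>. (W \<omega>, V \<omega>)) = - (\<Sum>z\<in>set_pmf d. pmf d z * log 2 (pmf d z))"
    unfolding HH_def d_def[symmetric] by (rule ent_sum[OF fd])
  moreover have "HH p V = - (\<Sum>z\<in>set_pmf d. pmf d z * log 2 (pmf pV (snd z)))"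
  proof -
    have "map_pmf snd d = pV" unfolding d_def pV_def by (simp add: map_pmf_comp)
    then show ?thesis unfolding HH_def pV_def[symmetric] using ent_map_sum[OF fd, of snd] by simp
  qed
  ultimately have step1: "HH p (\<lambda>\<omega>. (W \<omega>, V \<omega>)) - HH p V \<le> - (\<Sum>z\<in>set_pmf d. pmf d z * log 2 (q z))"
    using g by linarith
  define K where "K = log 2 c - log 2 eps"
  have K0: "K \<ge> 0" unfolding K_def using c1 e0 e1 by simp
  have l1: "- log 2 (1 - eps) \<ge> 0" using e0 e1 by simp
  have "- (\<Sum>z\<in>set_pmf d. pmf d z * log 2 (q z)) = (\<Sum>z\<in>set_pmf d. pmf d z * (- log 2 (q z)))"
    by (simp add: sum_negf)
  also have "\<dots> \<le> (\<Sum>z\<in>set_pmf d. pmf d z * (- log 2 (1 - eps) + K * (if z \<in> {z. fst z \<noteq> snd z} then 1 else 0)))"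
  proof (intro sum_mono mult_left_mono)
    fix z :: "'b \<times> 'b"
    show "- log 2 (q z) \<le> - log 2 (1 - eps) + K * (if z \<in> {z. fst z \<noteq> snd z} then 1 else 0)"
      using l1 e0 c1 by (cases z) (auto simp: q_def K_def log_divide)
  qed simp
  also have "\<dots> = - log 2 (1 - eps) * (\<Sum>z\<in>set_pmf d. pmf d z) + K * (\<Sum>z\<in>set_pmf d. pmf d z * (if z \<in> {z. fst z \<noteq> snd z} then 1 else 0))"
    by (simp add: sum.distrib[symmetric] sum_distrib_left sum_distrib_right algebra_simps)
  also have "(\<Sum>z\<in>set_pmf d. pmf d z) = 1" by (simp add: sum_pmf_eq_1 fd)
  also have "(\<Sum>z\<in>set_pmf d. pmf d z * (if z \<in> {z. fst z \<noteq> snd z} then 1 else 0)) = measure_pmf.prob d {z. fst z \<noteq> snd z}"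
    by (rule sum_pmf_indicator[OF fd])
  also have "\<dots> = measure_pmf.prob p {\<omega>. V \<omega> \<noteq> W \<omega>}" unfolding d_def by (simp add: vimage_def eq_commute)
  finally have "- (\<Sum>z\<in>set_pmf d. pmf d z * log 2 (q z)) \<le> - log 2 (1 - eps) + K * measure_pmf.prob p {\<omega>. V \<omega> \<noteq> W \<omega>}" by simp
  also have "\<dots> \<le> - log 2 (1 - eps) + K * eps" using K0 err by (simp add: mult_left_mono)
  finally show ?thesis using step1 unfolding K_def c_def by (simp add: algebra_simps)
qed


definition Est :: "real \<Rightarrow> real \<Rightarrow> state pmf" where
  "Est d1 d2 = pair_pmf (bernoulli_pmf (1-d1)) (bernoulli_pmf (1-d2))"

fun runh :: "real \<Rightarrow> real \<Rightarrow> encoder \<Rightarrow> nat \<Rightarrow> nat \<Rightarrow> nat \<Rightarrow> nat \<Rightarrow> slot list pmf" where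
  "runh d1 d2 f w1 w2 tA 0 = return_pmf []"
| "runh d1 d2 f w1 w2 tA (Suc i) = runh d1 d2 f w1 w2 tA i \<bind>
     (\<lambda>h. map_pmf (\<lambda>e. h @ [(e, e, f i w1 w2 tA (map rep_state h))]) (Est d1 d2))"

lemma ex_some_if [simp]: "(\<exists>y. (if b then Some x else None) = Some y) \<longleftrightarrow> b"
  by auto

lemma step_honest:
  "step d1 d2 f w1 w2 tA tB tC honest_ack honest_ack i h
   = map_pmf (\<lambda>e. h @ [(e, e, f i w1 w2 tA (map rep_state h))]) (Est d1 d2)"
  unfolding step_def honest_ack_def Est_def pair_pmf_def
  by (simp add: map_bind_pmf bind_return_pmf map_return_pmf Let_def)

lemma step_honest_fun:
  "step d1 d2 f w1 w2 tA tB tC honest_ack honest_ack i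
   = (\<lambda>h. map_pmf (\<lambda>e. h @ [(e, e, f i w1 w2 tA (map rep_state h))]) (Est d1 d2))"
  by (rule ext) (rule step_honest)

lemma run_honest:
  "run d1 d2 f w1 w2 tA tB tC honest_ack honest_ack n = runh d1 d2 f w1 w2 tA n"
  by (induction n) (simp_all add: step_honest_fun)

lemma set_runh:
  assumes fb: "\<And>i w1 w2 t s. f i w1 w2 t s < B"
  shows "h \<in> set_pmf (runh d1 d2 f w1 w2 tA n) \<Longrightarrow>
     length h = n \<and> (\<forall>s\<in>set h. fst (snd s) = fst s \<and> snd (snd s) < B)"
proof (induction n arbitrary: h)
  case 0
  then show ?case by simp
next
  case (Suc n)
  from Suc.prems obtain x e where x: "x \<in> set_pmf (runh d1 d2 f w1 w2 tA n)"
    and h: "h = x @ [(e, e, f n w1 w2 tA (map rep_state x))]" by (auto simp: set_bind_pmf)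
  have ih: "length x = n \<and> (\<forall>s\<in>set x. fst (snd s) = fst s \<and> snd (snd s) < B)" by (rule Suc.IH[OF x])
  show ?case unfolding h using ih fb by simp
qed

lemma length_runh: "h \<in> set_pmf (runh d1 d2 f w1 w2 tA n) \<Longrightarrow> length h = n"
  by (induction n arbitrary: h) (auto simp: set_bind_pmf)

lemma runh_prefix:
  "m \<le> n \<Longrightarrow> map_pmf (take m) (runh d1 d2 f w1 w2 tA n) = runh d1 d2 f w1 w2 tA m"
proof (induction n arbitrary: m)
  case 0
  then show ?case by simp
next
  case (Suc n)
  let ?R = "runh d1 d2 f w1 w2 tA"
  show ?case
  proof (cases "m = Suc n")
    case True
    have "map_pmf (take m) (?R (Suc n)) = map_pmf id (?R (Suc n))"
    proof (rule map_pmf_cong[OF refl])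
      fix h assume "h \<in> set_pmf (?R (Suc n))"
      then have "length h = Suc n" by (rule length_runh)
      then show "take m h = id h" using True by simp
    qed
    then show ?thesis using True by simp
  next
    case False
    then have mn: "m \<le> n" using Suc.prems by simp
    have "map_pmf (take m) (?R (Suc n)) = ?R n \<bind> (\<lambda>h. return_pmf (take m h))"
      unfolding runh.simps map_bind_pmf
    proof (rule bind_pmf_cong[OF refl])
      fix h assume h: "h \<in> set_pmf (?R n)"
      have "length h = n" using h by (rule length_runh)
      then show "map_pmf (take m) (map_pmf (\<lambda>e. h @ [(e, e, f n w1 w2 tA (map rep_state h))]) (Est d1 d2))
          = return_pmf (take m h)" using mn by (simp add: map_pmf_comp)
    qed
    also have "\<dots> = map_pmf (take m) (?R n)" by (simp add: map_pmf_def)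
    also have "\<dots> = ?R m" using Suc.IH[OF mn] .
    finally show ?thesis .
  qed
qed

lemma runh_slot:
  assumes i: "i < n"
  shows "map_pmf (\<lambda>h. (take i h, h ! i)) (runh d1 d2 f w1 w2 tA n)
       = runh d1 d2 f w1 w2 tA i \<bind> (\<lambda>h. map_pmf (\<lambda>e. (h, (e, e, f i w1 w2 tA (map rep_state h)))) (Est d1 d2))"
proof -
  let ?R = "runh d1 d2 f w1 w2 tA"
  have "map_pmf (\<lambda>h. (take i h, h ! i)) (?R n) = map_pmf (\<lambda>h'. (butlast h', last h')) (map_pmf (take (Suc i)) (?R n))"
    unfolding map_pmf_comp
  proof (rule map_pmf_cong[OF refl])
    fix h assume "h \<in> set_pmf (?R n)"
    then have "length h = n" by (rule length_runh)
    then have "take (Suc i) h = take i h @ [h ! i]" using i by (simp add: take_Suc_conv_app_nth)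
    then show "(take i h, h ! i) = (butlast (take (Suc i) h), last (take (Suc i) h))" by simp
  qed
  also have "map_pmf (take (Suc i)) (?R n) = ?R (Suc i)" using i by (intro runh_prefix) simp
  also have "map_pmf (\<lambda>h'. (butlast h', last h')) (?R (Suc i))
     = ?R i \<bind> (\<lambda>h. map_pmf (\<lambda>e. (h, (e, e, f i w1 w2 tA (map rep_state h)))) (Est d1 d2))"
    by (simp add: map_bind_pmf map_pmf_comp)
  finally show ?thesis .
qed

lemma pair_bind_pmf: "pair_pmf (bind_pmf C F) E = bind_pmf C (\<lambda>c. pair_pmf (F c) E)"
  unfolding pair_pmf_def by (simp add: bind_assoc_pmf)

lemma bind_pair_aux:
  "C \<bind> (\<lambda>c. R \<bind> (\<lambda>h. return_pmf (g h, c))) = pair_pmf (map_pmf g R) C"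
proof -
  have "pair_pmf (map_pmf g R) C = R \<bind> (\<lambda>h. C \<bind> (\<lambda>c. return_pmf (g h, c)))"
    unfolding pair_pmf_def by (simp add: bind_map_pmf)
  also have "\<dots> = C \<bind> (\<lambda>c. R \<bind> (\<lambda>h. return_pmf (g h, c)))" by (rule bind_commute_pmf)
  finally show ?thesis by simp
qed

definition ctxP :: "nat pmf \<Rightarrow> nat pmf \<Rightarrow> nat pmf \<Rightarrow> (nat \<times> nat \<times> nat) pmf" where
  "ctxP PW1 PW2 PA = PW1 \<bind> (\<lambda>w1. PW2 \<bind> (\<lambda>w2. map_pmf (\<lambda>t. (w1, w2, t)) PA))"

definition Qd :: "real \<Rightarrow> real \<Rightarrow> nat \<Rightarrow> encoder \<Rightarrow> nat pmf \<Rightarrow> nat pmf \<Rightarrow> nat pmf \<Rightarrow> (nat \<times> nat \<times> slot list) pmf" where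
  "Qd d1 d2 n f PA PW1 PW2 = ctxP PW1 PW2 PA \<bind> (\<lambda>(w1,w2,tA). map_pmf (\<lambda>h. (w1,w2,h)) (runh d1 d2 f w1 w2 tA n))"

lemma exp_C:
  "map_pmf (\<lambda>\<omega>. ((W1_of \<omega>, W2_of \<omega>, hist_of \<omega>), thC_of \<omega>)) (channel_exp d1 d2 n f PA PB PC PW1 PW2 honest_ack honest_ack)
   = pair_pmf (Qd d1 d2 n f PA PW1 PW2) PC"
  unfolding channel_exp_def run_honest Qd_def ctxP_def
  by (simp add: map_bind_pmf bind_assoc_pmf bind_return_pmf pair_bind_pmf bind_map_pmf map_pmf_comp bind_pair_aux
     W1_of_def W2_of_def hist_of_def thC_of_def)

lemma exp_B:
  "map_pmf (\<lambda>\<omega>. ((W1_of \<omega>, W2_of \<omega>, hist_of \<omega>), thB_of \<omega>)) (channel_exp d1 d2 n f PA PB PC PW1 PW2 honest_ack honest_ack)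
   = pair_pmf (Qd d1 d2 n f PA PW1 PW2) PB"
  unfolding channel_exp_def run_honest Qd_def ctxP_def
  by (simp add: map_bind_pmf bind_assoc_pmf bind_return_pmf pair_bind_pmf bind_map_pmf map_pmf_comp bind_pair_aux
     W1_of_def W2_of_def hist_of_def thB_of_def)

lemma exp_Q:
  "map_pmf (\<lambda>\<omega>. (W1_of \<omega>, W2_of \<omega>, hist_of \<omega>)) (channel_exp d1 d2 n f PA PB PC PW1 PW2 honest_ack honest_ack)
   = Qd d1 d2 n f PA PW1 PW2"
proof -
  have "map_pmf fst (map_pmf (\<lambda>\<omega>. ((W1_of \<omega>, W2_of \<omega>, hist_of \<omega>), thC_of \<omega>)) (channel_exp d1 d2 n f PA PB PC PW1 PW2 honest_ack honest_ack))
    = Qd d1 d2 n f PA PW1 PW2" unfolding exp_C by (rule map_fst_pair_pmf)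
  then show ?thesis by (simp add: map_pmf_comp)
qed

lemma Qd_slot:
  assumes i: "i < n"
  shows "map_pmf (\<lambda>(w1,w2,h). (((w1,w2), take i h, snd (snd (h!i))), fst (h!i))) (Qd d1 d2 n f PA PW1 PW2)
   = pair_pmf (map_pmf (\<lambda>(w1,w2,h). ((w1,w2), take i h, snd (snd (h!i)))) (Qd d1 d2 n f PA PW1 PW2)) (Est d1 d2)"
proof -
  have L: "map_pmf (\<lambda>(w1',w2',h). (((w1',w2'), take i h, snd (snd (h!i))), fst (h!i))) (map_pmf (\<lambda>h. (w1,w2,h)) (runh d1 d2 f w1 w2 tA n))
     = runh d1 d2 f w1 w2 tA i \<bind> (\<lambda>h. map_pmf (\<lambda>e. (((w1,w2),h, f i w1 w2 tA (map rep_state h)), e)) (Est d1 d2))"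
    for w1 w2 tA
  proof -
    have "map_pmf (\<lambda>(w1',w2',h). (((w1',w2'), take i h, snd (snd (h!i))), fst (h!i))) (map_pmf (\<lambda>h. (w1,w2,h)) (runh d1 d2 f w1 w2 tA n))
      = map_pmf (\<lambda>(h0,s). (((w1,w2),h0, snd (snd s)), fst s)) (map_pmf (\<lambda>h. (take i h, h ! i)) (runh d1 d2 f w1 w2 tA n))"
      by (simp add: map_pmf_comp)
    also have "\<dots> = runh d1 d2 f w1 w2 tA i \<bind> (\<lambda>h. map_pmf (\<lambda>e. (((w1,w2),h, f i w1 w2 tA (map rep_state h)), e)) (Est d1 d2))"
      unfolding runh_slot[OF i] by (simp add: map_bind_pmf map_pmf_comp)
    finally show ?thesis .
  qed
  have R: "pair_pmf (map_pmf (\<lambda>(w1',w2',h). ((w1',w2'), take i h, snd (snd (h!i)))) (map_pmf (\<lambda>h. (w1,w2,h)) (runh d1 d2 f w1 w2 tA n))) (Est d1 d2)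
     = runh d1 d2 f w1 w2 tA i \<bind> (\<lambda>h. map_pmf (\<lambda>e. (((w1,w2),h, f i w1 w2 tA (map rep_state h)), e)) (Est d1 d2))"
    for w1 w2 tA
  proof -
    have "map_pmf (\<lambda>(w1',w2',h). ((w1',w2'), take i h, snd (snd (h!i)))) (map_pmf (\<lambda>h. (w1,w2,h)) (runh d1 d2 f w1 w2 tA n))
      = map_pmf (\<lambda>(h0,s). ((w1,w2),h0, snd (snd s))) (map_pmf (\<lambda>h. (take i h, h ! i)) (runh d1 d2 f w1 w2 tA n))"
      by (simp add: map_pmf_comp)
    also have "\<dots> = runh d1 d2 f w1 w2 tA i \<bind> (\<lambda>h. return_pmf ((w1,w2),h, f i w1 w2 tA (map rep_state h)))"
      unfolding runh_slot[OF i] by (simp add: map_bind_pmf map_pmf_comp)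
    finally show ?thesis by (simp add: pair_bind_pmf pair_return_pmf1)
  qed
  show ?thesis unfolding Qd_def map_bind_pmf pair_bind_pmf
    by (intro bind_pmf_cong refl) (auto simp: L R split: prod.splits)
qed


definition oc :: "(state \<Rightarrow> bool) \<Rightarrow> slot \<Rightarrow> obs" where
  "oc c s = (if c (fst s) then Some (snd (snd s)) else None)"

lemma pair_label: "map_pmf (\<lambda>(z,e). (e, F e z)) (pair_pmf D E) = E \<bind> (\<lambda>e. map_pmf (\<lambda>z. (e, F e z)) D)"
proof -
  have "map_pmf (\<lambda>(z,e). (e, F e z)) (pair_pmf D E) = map_pmf (\<lambda>(e,z). (e, F e z)) (pair_pmf E D)"
    by (subst pair_commute_pmf) (simp add: map_pmf_comp case_prod_unfold)
  also have "\<dots> = E \<bind> (\<lambda>e. map_pmf (\<lambda>z. (e, F e z)) D)"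
    unfolding pair_pmf_def map_bind_pmf by (simp add: map_pmf_def bind_assoc_pmf bind_return_pmf)
  finally show ?thesis .
qed

lemma sum_if_split:
  assumes "finite (set_pmf E)"
  shows "(\<Sum>e\<in>set_pmf E. pmf E e * (if c e then a else b))
     = measure_pmf.prob E {e. c e} * a + (1 - measure_pmf.prob E {e. c e}) * b"
proof -
  have m: "measure_pmf.prob E {e. c e} = (\<Sum>e\<in>set_pmf E. pmf E e * (if e \<in> {e. c e} then 1 else 0))"
    using sum_pmf_indicator[OF assms, of "{e. c e}"] by simp
  have one: "(\<Sum>e\<in>set_pmf E. pmf E e) = 1" using assms by (simp add: sum_pmf_eq_1)
  have "(\<Sum>e\<in>set_pmf E. pmf E e * (if c e then a else b))
     = (\<Sum>e\<in>set_pmf E. pmf E e * (if e \<in> {e. c e} then 1 else 0) * a + (pmf E e - pmf E e * (if e \<in> {e. c e} then 1 else 0)) * b)"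
    by (intro sum.cong) auto
  also have "\<dots> = measure_pmf.prob E {e. c e} * a + (1 - measure_pmf.prob E {e. c e}) * b"
    unfolding m by (simp add: sum.distrib sum_distrib_right[symmetric] sum_subtractf one)
  finally show ?thesis .
qed

lemma ent_step:
  fixes D0 :: "'z pmf" and E :: "state pmf" and A :: "'z \<Rightarrow> 'a" and X :: "'z \<Rightarrow> nat"
  assumes fD: "finite (set_pmf D0)" and fE: "finite (set_pmf E)"
  shows "ent (map_pmf (\<lambda>(z,e). (A z, e, if c e then Some (X z) else None)) (pair_pmf D0 E))
       = ent E + ent (map_pmf A D0)
         + measure_pmf.prob E {e. c e} * (ent (map_pmf (\<lambda>z. (A z, X z)) D0) - ent (map_pmf A D0))"
proof -
  define F where "F = (\<lambda>e z. (A z, if c e then Some (X z) else None))"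
  define g where "g = (\<lambda>(e::state, (a::'a, y::obs)). (a, e, y))"
  have gi: "inj g" unfolding g_def by (auto simp: inj_def)
  have "map_pmf (\<lambda>(z,e). (A z, e, if c e then Some (X z) else None)) (pair_pmf D0 E)
      = map_pmf g (map_pmf (\<lambda>(z,e). (e, F e z)) (pair_pmf D0 E))"
    by (simp add: map_pmf_comp g_def F_def case_prod_unfold)
  then have "ent (map_pmf (\<lambda>(z,e). (A z, e, if c e then Some (X z) else None)) (pair_pmf D0 E))
      = ent (map_pmf (\<lambda>(z,e). (e, F e z)) (pair_pmf D0 E))"
    using ent_map_inj[of g "map_pmf (\<lambda>(z,e). (e, F e z)) (pair_pmf D0 E)"] gi inj_on_subset[OF gi] by simp
  also have "\<dots> = ent E + (\<Sum>e\<in>set_pmf E. pmf E e * ent (map_pmf (F e) D0))"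
    unfolding pair_label by (rule ent_label[OF fD fE])
  also have "(\<Sum>e\<in>set_pmf E. pmf E e * ent (map_pmf (F e) D0))
      = (\<Sum>e\<in>set_pmf E. pmf E e * (if c e then ent (map_pmf (\<lambda>z. (A z, X z)) D0) else ent (map_pmf A D0)))"
  proof (intro sum.cong refl)
    fix e
    show "pmf E e * ent (map_pmf (F e) D0) = pmf E e * (if c e then ent (map_pmf (\<lambda>z. (A z, X z)) D0) else ent (map_pmf A D0))"
    proof (cases "c e")
      case True
      have "map_pmf (F e) D0 = map_pmf (\<lambda>(a,x). (a, Some x)) (map_pmf (\<lambda>z. (A z, X z)) D0)"
        using True by (simp add: F_def map_pmf_comp)
      moreover have "ent \<dots> = ent (map_pmf (\<lambda>z. (A z, X z)) D0)" by (rule ent_map_inj) (auto simp: inj_on_def)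
      ultimately show ?thesis using True by simp
    next
      case False
      have "map_pmf (F e) D0 = map_pmf (\<lambda>a. (a, None)) (map_pmf A D0)"
        using False by (simp add: F_def map_pmf_comp)
      moreover have "ent \<dots> = ent (map_pmf A D0)" by (rule ent_map_inj) (auto simp: inj_on_def)
      ultimately show ?thesis using False by simp
    qed
  qed
  also have "\<dots> = measure_pmf.prob E {e. c e} * ent (map_pmf (\<lambda>z. (A z, X z)) D0) + (1 - measure_pmf.prob E {e. c e}) * ent (map_pmf A D0)"
    by (rule sum_if_split[OF fE])
  finally show ?thesis by (simp add: algebra_simps)
qed

locale core =
  fixes Q :: "(nat \<times> nat \<times> slot list) pmf" and d1 d2 :: real and n B :: nat and M1 M2 :: "nat set"
  assumes finQ: "finite (set_pmf Q)"
    and suppQ: "\<And>w1 w2 h. (w1,w2,h) \<in> set_pmf Q \<Longrightarrow> length h = n \<and> (\<forall>s\<in>set h. snd (snd s) < B)"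
    and unif: "map_pmf (\<lambda>(w1,w2,h). (w1,w2)) Q = pair_pmf (pmf_of_set M1) (pmf_of_set M2)"
    and M1: "finite M1" "M1 \<noteq> {}" and M2: "finite M2" "M2 \<noteq> {}"
    and slot: "\<And>i. i < n \<Longrightarrow> map_pmf (\<lambda>(w1,w2,h). (((w1,w2), take i h, snd (snd (h!i))), fst (h!i))) Q
        = pair_pmf (map_pmf (\<lambda>(w1,w2,h). ((w1,w2), take i h, snd (snd (h!i)))) Q) (Est d1 d2)"
    and d: "0 < d1" "d1 < 1" "0 < d2" "d2 < 1"
begin

definition Delta :: "(state \<Rightarrow> bool) \<Rightarrow> (nat \<times> nat \<Rightarrow> 'u) \<Rightarrow> nat \<Rightarrow> real" where
  "Delta c U i = HH Q (\<lambda>(w1,w2,h). ((U (w1,w2), map (oc c) (take i h), map fst (take i h)), snd (snd (h!i))))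
     - HH Q (\<lambda>(w1,w2,h). (U (w1,w2), map (oc c) (take i h), map fst (take i h)))"

lemma finE: "finite (set_pmf (Est d1 d2))"
proof -
  have "set_pmf (Est d1 d2) \<subseteq> UNIV" by simp
  moreover have "finite (UNIV :: state set)" by simp
  ultimately show ?thesis using finite_subset by blast
qed

lemma tele:
  fixes U :: "nat \<times> nat \<Rightarrow> 'u"
  shows "m \<le> n \<Longrightarrow> HH Q (\<lambda>(w1,w2,h). (U (w1,w2), map (oc c) (take m h), map fst (take m h)))
     = HH Q (\<lambda>(w1,w2,h). U (w1,w2)) + m * ent (Est d1 d2)
       + measure_pmf.prob (Est d1 d2) {e. c e} * (\<Sum>i<m. Delta c U i)"
proof (induction m)
  case 0
  have "HH Q (\<lambda>(w1,w2,h). (U (w1,w2), map (oc c) (take 0 h), map fst (take 0 h)))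
      = HH Q (\<lambda>\<omega>. (\<lambda>u. (u, [] :: obs list, [] :: state list)) ((\<lambda>(w1,w2,h). U (w1,w2)) \<omega>))"
    by (simp add: case_prod_unfold)
  also have "\<dots> = HH Q (\<lambda>(w1,w2,h). U (w1,w2))" by (rule HH_inj) (auto simp: inj_def)
  finally show ?case by simp
next
  case (Suc m)
  have mn: "m < n" using Suc.prems by simp
  define E where "E = Est d1 d2"
  define D0 where "D0 = map_pmf (\<lambda>(w1,w2,h). ((w1,w2), take m h, snd (snd (h!m)))) Q"
  define A where "A = (\<lambda>(w::nat\<times>nat, h0::slot list, x::nat). (U w, map (oc c) h0, map fst h0))"
  define X where "X = (\<lambda>(w::nat\<times>nat, h0::slot list, x::nat). x)"
  define g2 where "g2 = (\<lambda>((u::'u,y,s), e::state, ob::obs). (u, y @ [ob], s @ [e]))"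
  have g2i: "inj g2" unfolding g2_def by (auto simp: inj_def)
  have fD: "finite (set_pmf D0)" unfolding D0_def using finQ by simp
  have "HH Q (\<lambda>(w1,w2,h). (U (w1,w2), map (oc c) (take (Suc m) h), map fst (take (Suc m) h)))
     = HH Q (\<lambda>\<omega>. g2 ((\<lambda>(z,e). (A z, e, if c e then Some (X z) else None))
            ((\<lambda>(w1,w2,h). (((w1,w2), take m h, snd (snd (h!m))), fst (h!m))) \<omega>)))"
  proof (rule HH_cong)
    fix \<omega> assume w: "\<omega> \<in> set_pmf Q"
    obtain w1 w2 h where om: "\<omega> = (w1,w2,h)" by (cases \<omega>) auto
    have "length h = n" using suppQ[of w1 w2 h] w om by simp
    then have tk: "take (Suc m) h = take m h @ [h ! m]" using mn by (simp add: take_Suc_conv_app_nth)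
    show "(\<lambda>(w1,w2,h). (U (w1,w2), map (oc c) (take (Suc m) h), map fst (take (Suc m) h))) \<omega>
      = g2 ((\<lambda>(z,e). (A z, e, if c e then Some (X z) else None))
            ((\<lambda>(w1,w2,h). (((w1,w2), take m h, snd (snd (h!m))), fst (h!m))) \<omega>))"
      unfolding om using tk by (simp add: g2_def A_def X_def oc_def)
  qed
  also have "\<dots> = ent (map_pmf g2 (map_pmf (\<lambda>(z,e). (A z, e, if c e then Some (X z) else None)) (pair_pmf D0 E)))"
    unfolding HH_def E_def D0_def slot[OF mn, symmetric] by (simp add: map_pmf_comp)
  also have "\<dots> = ent (map_pmf (\<lambda>(z,e). (A z, e, if c e then Some (X z) else None)) (pair_pmf D0 E))"
    by (rule ent_map_inj) (use g2i inj_on_subset in blast)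
  also have "\<dots> = ent E + ent (map_pmf A D0) + measure_pmf.prob E {e. c e} * (ent (map_pmf (\<lambda>z. (A z, X z)) D0) - ent (map_pmf A D0))"
    by (rule ent_step[OF fD]) (simp add: E_def finE)
  also have "ent (map_pmf A D0) = HH Q (\<lambda>(w1,w2,h). (U (w1,w2), map (oc c) (take m h), map fst (take m h)))"
    unfolding HH_def D0_def A_def by (simp add: map_pmf_comp case_prod_unfold)
  also have "ent (map_pmf (\<lambda>z. (A z, X z)) D0) = HH Q (\<lambda>(w1,w2,h). ((U (w1,w2), map (oc c) (take m h), map fst (take m h)), snd (snd (h!m))))"
    unfolding HH_def D0_def A_def X_def by (simp add: map_pmf_comp case_prod_unfold)
  finally show ?case using Suc.IH mn unfolding Delta_def E_def by (simp add: algebra_simps)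
qed

end


definition proj :: "(state \<Rightarrow> bool) \<Rightarrow> obs list \<times> state list \<Rightarrow> obs list" where
  "proj c p = map2 (\<lambda>y e. if c e then y else None) (fst p) (snd p)"

lemma proj_oc:
  assumes "\<And>e. c e \<Longrightarrow> c' e"
  shows "map (oc c) h = proj c (map (oc c') h, map fst h)"
  unfolding proj_def by (induction h) (auto simp: oc_def dest: assms)

lemma cond_mono2:
  assumes fin: "finite (set_pmf p)" and V: "\<And>\<omega>. \<omega> \<in> set_pmf p \<Longrightarrow> V \<omega> = g (Z \<omega>)"
  shows "HH p (\<lambda>\<omega>. (Z \<omega>, X \<omega>)) - HH p Z \<le> HH p (\<lambda>\<omega>. (V \<omega>, X \<omega>)) - HH p V"
proof -
  have "HH p (\<lambda>\<omega>. (Z \<omega>, X \<omega>)) = HH p (\<lambda>\<omega>. (\<lambda>(a,b). (b,a)) (X \<omega>, Z \<omega>))" by simp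
  also have "\<dots> = HH p (\<lambda>\<omega>. (X \<omega>, Z \<omega>))" by (rule HH_inj) (auto simp: inj_def)
  finally have 1: "HH p (\<lambda>\<omega>. (Z \<omega>, X \<omega>)) = HH p (\<lambda>\<omega>. (X \<omega>, Z \<omega>))" .
  have "HH p (\<lambda>\<omega>. (V \<omega>, X \<omega>)) = HH p (\<lambda>\<omega>. (\<lambda>(a,b). (b,a)) (X \<omega>, V \<omega>))" by simp
  also have "\<dots> = HH p (\<lambda>\<omega>. (X \<omega>, V \<omega>))" by (rule HH_inj) (auto simp: inj_def)
  finally have 2: "HH p (\<lambda>\<omega>. (V \<omega>, X \<omega>)) = HH p (\<lambda>\<omega>. (X \<omega>, V \<omega>))" .
  show ?thesis unfolding 1 2 by (rule cond_mono[where g=g, OF fin]) (rule V)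
qed

lemma measure_Est_fst: "0 < d1 \<Longrightarrow> d1 < 1 \<Longrightarrow> measure_pmf.prob (Est d1 d2) {e. fst e} = 1 - d1"
proof -
  assume a: "0 < d1" "d1 < 1"
  have "{e::state. fst e} = {True} \<times> UNIV" by auto
  then show ?thesis unfolding Est_def using a
    by (simp add: measure_pmf_prob_product measure_pmf_single)
qed

lemma measure_Est_snd: "0 < d2 \<Longrightarrow> d2 < 1 \<Longrightarrow> measure_pmf.prob (Est d1 d2) {e. snd e} = 1 - d2"
proof -
  assume a: "0 < d2" "d2 < 1"
  have "{e::state. snd e} = UNIV \<times> {True}" by auto
  then show ?thesis unfolding Est_def using a
    by (simp add: measure_pmf_prob_product measure_pmf_single)
qed

lemma measure_Est_or: "0 < d1 \<Longrightarrow> d1 < 1 \<Longrightarrow> 0 < d2 \<Longrightarrow> d2 < 1 \<Longrightarrow>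
   measure_pmf.prob (Est d1 d2) {e. fst e \<or> snd e} = 1 - d1 * d2"
proof -
  assume a: "0 < d1" "d1 < 1" "0 < d2" "d2 < 1"
  have s: "{e::state. fst e \<or> snd e} = UNIV - {(False, False)}" by auto
  have "measure_pmf.prob (Est d1 d2) (UNIV - {(False, False)}) = measure_pmf.prob (Est d1 d2) UNIV - measure_pmf.prob (Est d1 d2) {(False, False)}"
    by (rule measure_pmf.finite_measure_Diff) auto
  also have "\<dots> = 1 - d1 * d2" unfolding Est_def measure_pmf_single using a by (simp add: pmf_pair)
  finally show ?thesis using s by simp
qed


lemma HH_swap: "HH p (\<lambda>\<omega>. (A \<omega>, B \<omega>)) = HH p (\<lambda>\<omega>. (B \<omega>, A \<omega>))"
proof -
  have "HH p (\<lambda>\<omega>. (A \<omega>, B \<omega>)) = HH p (\<lambda>\<omega>. (\<lambda>(a,b). (b,a)) (B \<omega>, A \<omega>))" by simp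
  also have "\<dots> = HH p (\<lambda>\<omega>. (B \<omega>, A \<omega>))" by (rule HH_inj) (auto simp: inj_def)
  finally show ?thesis .
qed

context core
begin

lemma full:
  fixes U :: "nat \<times> nat \<Rightarrow> 'u"
  shows "HH Q (\<lambda>(w1,w2,h). (U (w1,w2), map (oc c) h, map fst h))
     = HH Q (\<lambda>(w1,w2,h). U (w1,w2)) + n * ent (Est d1 d2)
       + measure_pmf.prob (Est d1 d2) {e. c e} * (\<Sum>i<n. Delta c U i)"
proof -
  have "HH Q (\<lambda>(w1,w2,h). (U (w1,w2), map (oc c) h, map fst h))
      = HH Q (\<lambda>(w1,w2,h). (U (w1,w2), map (oc c) (take n h), map fst (take n h)))"
  proof (rule HH_cong)
    fix \<omega> assume "\<omega> \<in> set_pmf Q"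
    then show "(\<lambda>(w1,w2,h). (U (w1,w2), map (oc c) h, map fst h)) \<omega>
      = (\<lambda>(w1,w2,h). (U (w1,w2), map (oc c) (take n h), map fst (take n h))) \<omega>"
      using suppQ by (cases \<omega>) auto
  qed
  also have "\<dots> = HH Q (\<lambda>(w1,w2,h). U (w1,w2)) + n * ent (Est d1 d2)
       + measure_pmf.prob (Est d1 d2) {e. c e} * (\<Sum>i<n. Delta c U i)" by (rule tele) simp
  finally show ?thesis .
qed

lemma HW1: "HH Q (\<lambda>(w1,w2,h). w1) = log 2 (card M1)"
proof -
  have "map_pmf (\<lambda>(w1,w2,h). w1) Q = map_pmf fst (map_pmf (\<lambda>(w1,w2,h). (w1,w2)) Q)"
    by (simp add: map_pmf_comp case_prod_unfold)
  also have "\<dots> = pmf_of_set M1" unfolding unif by (rule map_fst_pair_pmf)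
  finally show ?thesis unfolding HH_def using ent_uniform M1 by simp
qed

lemma HW2: "HH Q (\<lambda>(w1,w2,h). w2) = log 2 (card M2)"
proof -
  have "map_pmf (\<lambda>(w1,w2,h). w2) Q = map_pmf snd (map_pmf (\<lambda>(w1,w2,h). (w1,w2)) Q)"
    by (simp add: map_pmf_comp case_prod_unfold)
  also have "\<dots> = pmf_of_set M2" unfolding unif by (rule map_snd_pair_pmf)
  finally show ?thesis unfolding HH_def using ent_uniform M2 by simp
qed

lemma HW12: "HH Q (\<lambda>(w1,w2,h). (w1,w2)) = log 2 (card M1) + log 2 (card M2)"
  unfolding HH_def unif using ent_pair[of "pmf_of_set M1" "pmf_of_set M2"] M1 M2 by (simp add: ent_uniform)

lemma Delta_or:
  assumes "\<And>e. c e \<Longrightarrow> fst e \<or> snd e"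
  shows "Delta (\<lambda>e. fst e \<or> snd e) U i \<le> Delta c U i"
proof -
  define Zo where "Zo = (\<lambda>(w1,w2,h). (U (w1,w2), map (oc (\<lambda>e. fst e \<or> snd e)) (take i h), map fst (take i h)))"
  define Zc where "Zc = (\<lambda>(w1,w2,h). (U (w1,w2), map (oc c) (take i h), map fst (take i h)))"
  define X where "X = (\<lambda>(w1::nat,w2::nat,h::slot list). snd (snd (h!i)))"
  have "HH Q (\<lambda>\<omega>. (Zo \<omega>, X \<omega>)) - HH Q Zo \<le> HH Q (\<lambda>\<omega>. (Zc \<omega>, X \<omega>)) - HH Q Zc"
  proof (rule cond_mono2[OF finQ, where g="\<lambda>(u,y,s). (u, proj c (y,s), s)"])
    fix \<omega> assume "\<omega> \<in> set_pmf Q"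
    show "Zc \<omega> = (\<lambda>(u,y,s). (u, proj c (y,s), s)) (Zo \<omega>)"
      unfolding Zc_def Zo_def using proj_oc[of c "\<lambda>e. fst e \<or> snd e", OF assms] by (cases \<omega>) auto
  qed
  then show ?thesis unfolding Delta_def Zo_def Zc_def X_def by (simp add: case_prod_unfold)
qed

lemma Delta_le:
  assumes i: "i < n" and B: "B > 0"
  shows "Delta c U i \<le> log 2 B"
proof -
  have "Delta c U i \<le> HH Q (\<lambda>(w1,w2,h). snd (snd (h!i)))"
    unfolding Delta_def
    using subadd[OF finQ, of "\<lambda>(w1,w2,h). snd (snd (h!i))" "\<lambda>(w1,w2,h). (U (w1,w2), map (oc c) (take i h), map fst (take i h))"]
      HH_swap[of Q "\<lambda>(w1,w2,h). snd (snd (h!i))" "\<lambda>(w1,w2,h). (U (w1,w2), map (oc c) (take i h), map fst (take i h))"]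
    by (simp add: case_prod_unfold)
  also have "\<dots> \<le> log 2 (card {..<B})"
  proof (rule HH_le_card)
    fix \<omega> assume w: "\<omega> \<in> set_pmf Q"
    obtain w1 w2 h where om: "\<omega> = (w1,w2,h)" by (cases \<omega>) auto
    have "length h = n" "\<forall>s\<in>set h. snd (snd s) < B" using suppQ[of w1 w2 h] w om by auto
    then show "(\<lambda>(w1,w2,h). snd (snd (h!i))) \<omega> \<in> {..<B}" using i om by auto
  qed simp
  finally show ?thesis by simp
qed

end


context core
begin

lemma main_ineq:
  assumes B: "B > 0"
   and F1: "HH Q (\<lambda>(w1,w2,h). (w1, map (oc fst) h)) - HH Q (\<lambda>(w1,w2,h). map (oc fst) h) \<le> F1"
   and F2: "HH Q (\<lambda>(w1,w2,h). (w2, map (oc snd) h)) - HH Q (\<lambda>(w1,w2,h). map (oc snd) h) \<le> F2"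
   and Lk: "log 2 (card M1) + HH Q (\<lambda>(w1,w2,h). (map (oc snd) h, map fst h))
            - HH Q (\<lambda>(w1,w2,h). (w1, map (oc snd) h, map fst h)) \<le> Lk"
  shows "log 2 (card M1) / (1-d1) + log 2 (card M2) / (1-d1*d2) - log 2 (card M1) / (1-d1*d2)
          + log 2 (card M1) / (d2*(1-d1))
       \<le> n * log 2 B + F1/(1-d1) + F2/(1-d1*d2) + (Lk + F1 + F2)/(d2*(1-d1))"
proof -
  define T1 where "T1 = log 2 (card M1)"
  define T2 where "T2 = log 2 (card M2)"
  define cor where "cor = (\<lambda>e::state. fst e \<or> snd e)"
  define nE where "nE = n * ent (Est d1 d2)"
  define p1 where "p1 = 1 - d1"
  define p2 where "p2 = 1 - d2"
  define po where "po = 1 - d1 * d2"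
  have pi1: "measure_pmf.prob (Est d1 d2) {e. fst e} = p1" unfolding p1_def using measure_Est_fst d by simp
  have pi2: "measure_pmf.prob (Est d1 d2) {e. snd e} = p2" unfolding p2_def using measure_Est_snd d by simp
  have pio: "measure_pmf.prob (Est d1 d2) {e. cor e} = po" unfolding po_def cor_def using measure_Est_or d by simp
  define S1e where "S1e = (\<Sum>i<n. Delta fst (\<lambda>w::nat\<times>nat. ()) i)"
  define S1a where "S1a = (\<Sum>i<n. Delta fst (\<lambda>(w1::nat,w2::nat). w1) i)"
  define Sa where "Sa = (\<Sum>i<n. Delta cor (\<lambda>(w1::nat,w2::nat). w1) i)"
  define Sab where "Sab = (\<Sum>i<n. Delta cor (\<lambda>w::nat\<times>nat. w) i)"
  define Sb where "Sb = (\<Sum>i<n. Delta cor (\<lambda>(w1::nat,w2::nat). w2) i)"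
  define S2b where "S2b = (\<Sum>i<n. Delta snd (\<lambda>(w1::nat,w2::nat). w2) i)"
  have t1: "HH Q (\<lambda>(w1,w2,h). ((), map (oc fst) h, map fst h)) = nE + p1 * S1e"
    using full[of "\<lambda>w. ()" fst] unfolding S1e_def nE_def pi1 by (simp add: case_prod_unfold)
  have t2: "HH Q (\<lambda>(w1,w2,h). (w1, map (oc fst) h, map fst h)) = T1 + nE + p1 * S1a"
    using full[of "\<lambda>(w1,w2). w1" fst] HW1 unfolding S1a_def nE_def pi1 T1_def by simp
  have t3: "HH Q (\<lambda>(w1,w2,h). (w1, map (oc cor) h, map fst h)) = T1 + nE + po * Sa"
    using full[of "\<lambda>(w1,w2). w1" cor] HW1 unfolding Sa_def nE_def pio T1_def by simp
  have t4: "HH Q (\<lambda>(w1,w2,h). ((w1,w2), map (oc cor) h, map fst h)) = T1 + T2 + nE + po * Sab"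
    using full[of "\<lambda>w. w" cor] HW12 unfolding Sab_def nE_def pio T1_def T2_def by simp
  have t5: "HH Q (\<lambda>(w1,w2,h). (w2, map (oc cor) h, map fst h)) = T2 + nE + po * Sb"
    using full[of "\<lambda>(w1,w2). w2" cor] HW2 unfolding Sb_def nE_def pio T2_def by simp
  have t6: "HH Q (\<lambda>(w1,w2,h). (w2, map (oc snd) h, map fst h)) = T2 + nE + p2 * S2b"
    using full[of "\<lambda>(w1,w2). w2" snd] HW2 unfolding S2b_def nE_def pi2 T2_def by simp
  have pj1: "map (oc fst) h = proj fst (map (oc cor) h, map fst h)" for h
    by (rule proj_oc) (simp add: cor_def)
  have pj2: "map (oc snd) h = proj snd (map (oc cor) h, map fst h)" for h
    by (rule proj_oc) (simp add: cor_def)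
  have "HH Q (\<lambda>(w1,w2,h). ((), map (oc fst) h, map fst h)) = HH Q (\<lambda>\<omega>. (\<lambda>z. ((), z)) ((\<lambda>(w1,w2,h). (map (oc fst) h, map fst h)) \<omega>))"
    by (simp add: case_prod_unfold)
  also have "\<dots> = HH Q (\<lambda>(w1,w2,h). (map (oc fst) h, map fst h))" by (rule HH_inj) (auto simp: inj_def)
  finally have u1: "HH Q (\<lambda>(w1,w2,h). ((), map (oc fst) h, map fst h)) = HH Q (\<lambda>(w1,w2,h). (map (oc fst) h, map fst h))" .
  have "HH Q (\<lambda>\<omega>. ((\<lambda>(w1,w2,h). w1) \<omega>, (\<lambda>(w1,w2,h). (map (oc fst) h, map fst h)) \<omega>)) - HH Q (\<lambda>(w1,w2,h). (map (oc fst) h, map fst h))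
     \<le> HH Q (\<lambda>\<omega>. ((\<lambda>(w1,w2,h). w1) \<omega>, (\<lambda>(w1,w2,h). map (oc fst) h) \<omega>)) - HH Q (\<lambda>(w1,w2,h). map (oc fst) h)"
    by (rule cond_mono[OF finQ, where g=fst]) (auto simp: case_prod_unfold)
  then have i1: "HH Q (\<lambda>(w1,w2,h). (w1, map (oc fst) h, map fst h)) - HH Q (\<lambda>(w1,w2,h). ((), map (oc fst) h, map fst h)) \<le> F1"
    using F1 u1 by (simp add: case_prod_unfold)
  have "HH Q (\<lambda>(w1,w2,h). ((w1,w2), map (oc cor) h, map fst h)) = HH Q (\<lambda>\<omega>. (\<lambda>(b,a,y,s). ((a,b),y,s)) ((\<lambda>(w1,w2,h). (w2, w1, map (oc cor) h, map fst h)) \<omega>))"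
    by (simp add: case_prod_unfold)
  also have "\<dots> = HH Q (\<lambda>(w1,w2,h). (w2, w1, map (oc cor) h, map fst h))" by (rule HH_inj) (auto simp: inj_def)
  finally have u2: "HH Q (\<lambda>(w1,w2,h). ((w1,w2), map (oc cor) h, map fst h)) = HH Q (\<lambda>(w1,w2,h). (w2, w1, map (oc cor) h, map fst h))" .
  have "HH Q (\<lambda>\<omega>. ((\<lambda>(w1,w2,h). w2) \<omega>, (\<lambda>(w1,w2,h). (w1, map (oc cor) h, map fst h)) \<omega>)) - HH Q (\<lambda>(w1,w2,h). (w1, map (oc cor) h, map fst h))
     \<le> HH Q (\<lambda>\<omega>. ((\<lambda>(w1,w2,h). w2) \<omega>, (\<lambda>(w1,w2,h). map (oc snd) h) \<omega>)) - HH Q (\<lambda>(w1,w2,h). map (oc snd) h)"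
    by (rule cond_mono[OF finQ, where g="\<lambda>(a,y,s). proj snd (y,s)"]) (auto simp: case_prod_unfold pj2)
  then have i2: "HH Q (\<lambda>(w1,w2,h). ((w1,w2), map (oc cor) h, map fst h)) - HH Q (\<lambda>(w1,w2,h). (w1, map (oc cor) h, map fst h)) \<le> F2"
    using F2 u2 by (simp add: case_prod_unfold)
  have i3: "HH Q (\<lambda>(w1,w2,h). (w2, map (oc cor) h, map fst h)) \<le> HH Q (\<lambda>(w1,w2,h). ((w1,w2), map (oc cor) h, map fst h))"
    using HH_mono[OF finQ, of "\<lambda>((a,b),y,s). (b,y,s)" "\<lambda>(w1,w2,h). ((w1,w2), map (oc cor) h, map fst h)"]
    by (simp add: case_prod_unfold)
  have "HH Q (\<lambda>\<omega>. ((\<lambda>(w1,w2,h). w1) \<omega>, (\<lambda>(w1,w2,h). (w2, map (oc cor) h, map fst h)) \<omega>)) - HH Q (\<lambda>(w1,w2,h). (w2, map (oc cor) h, map fst h))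
     \<le> HH Q (\<lambda>\<omega>. ((\<lambda>(w1,w2,h). w1) \<omega>, (\<lambda>(w1,w2,h). map (oc fst) h) \<omega>)) - HH Q (\<lambda>(w1,w2,h). map (oc fst) h)"
    by (rule cond_mono[OF finQ, where g="\<lambda>(a,y,s). proj fst (y,s)"]) (auto simp: case_prod_unfold pj1)
  then have i4a: "HH Q (\<lambda>(w1,w2,h). (w1, w2, map (oc cor) h, map fst h)) - F1 \<le> HH Q (\<lambda>(w1,w2,h). (w2, map (oc cor) h, map fst h))"
    using F1 by (simp add: case_prod_unfold)
  have "HH Q (\<lambda>\<omega>. (\<lambda>(a,b,y,s). (a, proj snd (y,s), s)) ((\<lambda>(w1,w2,h). (w1, w2, map (oc cor) h, map fst h)) \<omega>))
      \<le> HH Q (\<lambda>(w1,w2,h). (w1, w2, map (oc cor) h, map fst h))" by (rule HH_mono[OF finQ])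
  then have i4b: "HH Q (\<lambda>(w1,w2,h). (w1, map (oc snd) h, map fst h)) \<le> HH Q (\<lambda>(w1,w2,h). (w1, w2, map (oc cor) h, map fst h))"
    by (simp add: case_prod_unfold pj2[symmetric])
  have "HH Q (\<lambda>\<omega>. ((\<lambda>(w1,w2,h). w2) \<omega>, (\<lambda>(w1,w2,h). (map (oc snd) h, map fst h)) \<omega>)) - HH Q (\<lambda>(w1,w2,h). (map (oc snd) h, map fst h))
     \<le> HH Q (\<lambda>\<omega>. ((\<lambda>(w1,w2,h). w2) \<omega>, (\<lambda>(w1,w2,h). map (oc snd) h) \<omega>)) - HH Q (\<lambda>(w1,w2,h). map (oc snd) h)"
    by (rule cond_mono[OF finQ, where g=fst]) (auto simp: case_prod_unfold)
  then have i4c: "HH Q (\<lambda>(w1,w2,h). (w2, map (oc snd) h, map fst h)) - HH Q (\<lambda>(w1,w2,h). (map (oc snd) h, map fst h)) \<le> F2"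
    using F2 by (simp add: case_prod_unfold)
  have D: "po * Sb - p2 * S2b \<ge> T1 - (Lk + F1 + F2)"
    using t5 t6 i4a i4b i4c Lk unfolding T1_def by (simp add: case_prod_unfold)
  have A: "T1 + p1 * S1a - p1 * S1e \<le> F1" using t1 t2 i1 by simp
  have Bq: "T2 + po * Sab - po * Sa \<le> F2" using t3 t4 i2 by simp
  have C: "po * Sb \<le> T1 + po * Sab" using t4 t5 i3 by simp
  have s1: "Sa \<le> S1a" unfolding Sa_def S1a_def cor_def by (intro sum_mono Delta_or) simp
  have s2: "Sb \<le> S2b" unfolding Sb_def S2b_def cor_def by (intro sum_mono Delta_or) simp
  have s3: "S1e \<le> n * log 2 B"
  proof -
    have "S1e \<le> (\<Sum>i<n. log 2 B)" unfolding S1e_def by (intro sum_mono Delta_le B) simp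
    then show ?thesis by simp
  qed
  have p1p: "p1 > 0" unfolding p1_def using d by simp
  have p2p: "p2 > 0" unfolding p2_def using d by simp
  have "d1 * d2 < d1 * 1" using d by (intro mult_strict_left_mono) auto
  then have pop: "po > 0" unfolding po_def using d by linarith
  define k where "k = d2 * (1 - d1)"
  have kp: "k > 0" unfolding k_def using d by simp
  have kk: "po - p2 = k" unfolding k_def po_def p2_def by (simp add: algebra_simps)
  define e where "e = Lk + F1 + F2"
  have "p2 * Sb \<le> p2 * S2b" using s2 p2p by (simp add: mult_left_mono)
  then have "(po - p2) * Sb \<ge> T1 - e" using D unfolding e_def by (simp add: algebra_simps)
  then have "k * Sb \<ge> T1 - e" using kk by simp
  then have dd: "(T1 - e) / k \<le> Sb" using kp by (simp add: pos_divide_le_eq mult.commute)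
  have "po * (Sb - Sab) \<le> T1" using C by (simp add: algebra_simps)
  then have "Sb - Sab \<le> T1 / po" using pop by (simp add: pos_le_divide_eq mult.commute)
  then have cc: "Sb - T1 / po \<le> Sab" by simp
  have "po * (Sa - Sab) \<ge> T2 - F2" using Bq by (simp add: algebra_simps)
  then have "(T2 - F2) / po \<le> Sa - Sab" using pop by (simp add: pos_divide_le_eq mult.commute)
  then have bb: "(T2 - F2) / po + Sab \<le> Sa" by simp
  have "p1 * Sa \<le> p1 * S1a" using s1 p1p by (simp add: mult_left_mono)
  then have "p1 * (S1e - Sa) \<ge> T1 - F1" using A by (simp add: algebra_simps)
  then have "(T1 - F1) / p1 \<le> S1e - Sa" using p1p by (simp add: pos_divide_le_eq mult.commute)
  then have aa: "(T1 - F1) / p1 + Sa \<le> S1e" by simp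
  have fin: "(T1 - F1) / p1 + (T2 - F2) / po + (T1 - e) / k - T1 / po \<le> n * log 2 B"
    using aa bb cc dd s3 by linarith
  have kd2: "k = d2 * p1" unfolding k_def p1_def ..
  show ?thesis using fin unfolding kd2 T1_def[symmetric] T2_def[symmetric] p1_def[symmetric] po_def[symmetric]
      e_def[symmetric]
    by (simp add: diff_divide_distrib add_divide_distrib)
qed

end

lemma distributed_pmf:
  fixes X :: "'a \<Rightarrow> 'b"
  shows "distributed (measure_pmf P) (count_space UNIV) X (\<lambda>x. ennreal (pmf (map_pmf X P) x))"
proof -
  have "distr (measure_pmf P) (count_space UNIV) X = density (count_space UNIV) (\<lambda>x. ennreal (pmf (map_pmf X P) x))"
    by (subst map_pmf_rep_eq[symmetric]) (rule measure_pmf_eq_density)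
  then show ?thesis unfolding distributed_def by auto
qed

lemma MI_pmf:
  fixes X :: "'a \<Rightarrow> 'b::countable" and Y :: "'a \<Rightarrow> 'c::countable"
  shows "MI P X Y = (\<integral>z. log 2 (pmf (map_pmf (\<lambda>\<omega>. (X \<omega>, Y \<omega>)) P) z
          / (pmf (map_pmf X P) (fst z) * pmf (map_pmf Y P) (snd z))) \<partial>measure_pmf (map_pmf (\<lambda>\<omega>. (X \<omega>, Y \<omega>)) P))"
proof -
  interpret information_space "measure_pmf P" 2 by standard simp
  let ?J = "map_pmf (\<lambda>\<omega>. (X \<omega>, Y \<omega>)) P"
  have sf1: "sigma_finite_measure (count_space (UNIV :: 'b set))"
    by (rule sigma_finite_measure_count_space_countable) simp
  have sf2: "sigma_finite_measure (count_space (UNIV :: 'c set))"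
    by (rule sigma_finite_measure_count_space_countable) simp
  have pm: "count_space (UNIV :: 'b set) \<Otimes>\<^sub>M count_space (UNIV :: 'c set) = count_space UNIV"
    using pair_measure_countable[of "UNIV :: 'b set" "UNIV :: 'c set"] by simp
  have Pxy: "distributed (measure_pmf P) (count_space UNIV \<Otimes>\<^sub>M count_space UNIV) (\<lambda>\<omega>. (X \<omega>, Y \<omega>)) (\<lambda>z. ennreal (pmf ?J z))"
    unfolding pm by (rule distributed_pmf)
  have "MI P X Y = integral\<^sup>L (count_space UNIV \<Otimes>\<^sub>M count_space UNIV)
      (\<lambda>z. pmf ?J z * log 2 (pmf ?J z / (pmf (map_pmf X P) (fst z) * pmf (map_pmf Y P) (snd z))))"
    unfolding MI_def
    by (rule mutual_information_distr[OF sf1 sf2 distributed_pmf _ distributed_pmf _ Pxy]) auto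
  also have "\<dots> = integral\<^sup>L (count_space UNIV)
      (\<lambda>z. pmf ?J z * log 2 (pmf ?J z / (pmf (map_pmf X P) (fst z) * pmf (map_pmf Y P) (snd z))))"
    unfolding pm ..
  also have "\<dots> = integral\<^sup>L (density (count_space UNIV) (\<lambda>z. ennreal (pmf ?J z)))
      (\<lambda>z. log 2 (pmf ?J z / (pmf (map_pmf X P) (fst z) * pmf (map_pmf Y P) (snd z))))"
    by (rule integral_real_density[symmetric]) auto
  also have "\<dots> = (\<integral>z. log 2 (pmf ?J z / (pmf (map_pmf X P) (fst z) * pmf (map_pmf Y P) (snd z))) \<partial>measure_pmf ?J)"
    unfolding measure_pmf_eq_density[symmetric] ..
  finally show ?thesis .
qed

lemma MI_indep:
  fixes X :: "'a \<Rightarrow> 'b::countable" and Y :: "'a \<Rightarrow> 'c::countable" and T :: "'a \<Rightarrow> 'd::countable"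
  assumes J: "map_pmf (\<lambda>\<omega>. ((X \<omega>, Y \<omega>), T \<omega>)) P = pair_pmf K PT"
    and fK: "finite (set_pmf K)"
  shows "MI P X (\<lambda>\<omega>. (Y \<omega>, T \<omega>)) = ent (map_pmf fst K) + ent (map_pmf snd K) - ent K"
proof -
  let ?J = "map_pmf (\<lambda>\<omega>. (X \<omega>, (Y \<omega>, T \<omega>))) P"
  define g where "g = (\<lambda>((x::'b,y::'c),t::'d). (x,(y,t)))"
  have gi: "inj g" unfolding g_def by (auto simp: inj_def)
  have J2: "?J = map_pmf g (pair_pmf K PT)" unfolding J[symmetric] by (simp add: map_pmf_comp g_def)
  have mX: "map_pmf X P = map_pmf fst K"
  proof -
    have "map_pmf X P = map_pmf (\<lambda>z. fst (fst z)) (map_pmf (\<lambda>\<omega>. ((X \<omega>, Y \<omega>), T \<omega>)) P)" by (simp add: map_pmf_comp)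
    also have "\<dots> = map_pmf fst (map_pmf fst (pair_pmf K PT))" unfolding J by (simp add: map_pmf_comp)
    finally show ?thesis by (simp only: map_fst_pair_pmf)
  qed
  have mYT: "map_pmf (\<lambda>\<omega>. (Y \<omega>, T \<omega>)) P = pair_pmf (map_pmf snd K) PT"
  proof -
    have "map_pmf (\<lambda>\<omega>. (Y \<omega>, T \<omega>)) P = map_pmf (\<lambda>(a, b). (snd a, id b)) (map_pmf (\<lambda>\<omega>. ((X \<omega>, Y \<omega>), T \<omega>)) P)"
      by (simp add: map_pmf_comp)
    also have "\<dots> = pair_pmf (map_pmf snd K) (map_pmf id PT)" unfolding J by (rule map_pair)
    finally show ?thesis by simp
  qed
  have "MI P X (\<lambda>\<omega>. (Y \<omega>, T \<omega>)) = (\<integral>z. log 2 (pmf ?J z / (pmf (map_pmf fst K) (fst z) * pmf (pair_pmf (map_pmf snd K) PT) (snd z))) \<partial>measure_pmf ?J)"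
    unfolding MI_pmf mX mYT ..
  also have "\<dots> = (\<integral>u. log 2 (pmf ?J (g u) / (pmf (map_pmf fst K) (fst (g u)) * pmf (pair_pmf (map_pmf snd K) PT) (snd (g u)))) \<partial>measure_pmf (pair_pmf K PT))"
    unfolding J2 by simp
  also have "\<dots> = (\<integral>u. log 2 (pmf K (fst u)) - log 2 (pmf (map_pmf fst K) (fst (fst u))) - log 2 (pmf (map_pmf snd K) (snd (fst u))) \<partial>measure_pmf (pair_pmf K PT))"
  proof (rule integral_cong_AE)
    show "AE u in measure_pmf (pair_pmf K PT). log 2 (pmf ?J (g u) / (pmf (map_pmf fst K) (fst (g u)) * pmf (pair_pmf (map_pmf snd K) PT) (snd (g u))))
       = log 2 (pmf K (fst u)) - log 2 (pmf (map_pmf fst K) (fst (fst u))) - log 2 (pmf (map_pmf snd K) (snd (fst u)))"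
    proof (rule AE_pmfI)
      fix u assume u: "u \<in> set_pmf (pair_pmf K PT)"
      obtain x y t where uu: "u = ((x,y),t)" by (cases u) auto
      have k: "(x,y) \<in> set_pmf K" and tt: "t \<in> set_pmf PT" using u uu by auto
      have pk: "pmf K (x,y) > 0" using pmf_pos_set[OF k] .
      have pt: "pmf PT t > 0" using pmf_pos_set[OF tt] .
      have p1: "pmf (map_pmf fst K) x > 0" by (rule pmf_pos_set) (use k in force)
      have p2: "pmf (map_pmf snd K) y > 0" by (rule pmf_pos_set) (use k in force)
      have "pmf ?J (g u) = pmf K (x,y) * pmf PT t"
        unfolding J2 pmf_map_inj'[OF gi] uu by (simp add: pmf_pair)
      then show "log 2 (pmf ?J (g u) / (pmf (map_pmf fst K) (fst (g u)) * pmf (pair_pmf (map_pmf snd K) PT) (snd (g u))))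
       = log 2 (pmf K (fst u)) - log 2 (pmf (map_pmf fst K) (fst (fst u))) - log 2 (pmf (map_pmf snd K) (snd (fst u)))"
        using pk pt p1 p2 by (simp add: uu g_def pmf_pair log_divide log_mult)
    qed
  qed auto
  also have "\<dots> = (\<integral>v. log 2 (pmf K v) - log 2 (pmf (map_pmf fst K) (fst v)) - log 2 (pmf (map_pmf snd K) (snd v)) \<partial>measure_pmf K)"
  proof -
    have "(\<integral>v. log 2 (pmf K v) - log 2 (pmf (map_pmf fst K) (fst v)) - log 2 (pmf (map_pmf snd K) (snd v)) \<partial>measure_pmf (map_pmf fst (pair_pmf K PT)))
      = (\<integral>u. log 2 (pmf K (fst u)) - log 2 (pmf (map_pmf fst K) (fst (fst u))) - log 2 (pmf (map_pmf snd K) (snd (fst u))) \<partial>measure_pmf (pair_pmf K PT))"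
      by (rule integral_map_pmf)
    then show ?thesis by (simp only: map_fst_pair_pmf)
  qed
  also have "\<dots> = (\<integral>v. log 2 (pmf K v) \<partial>measure_pmf K) - (\<integral>v. log 2 (pmf (map_pmf fst K) (fst v)) \<partial>measure_pmf K)
       - (\<integral>v. log 2 (pmf (map_pmf snd K) (snd v)) \<partial>measure_pmf K)"
    using fK by (simp add: integrable_measure_pmf_finite)
  also have "\<dots> = ent (map_pmf fst K) + ent (map_pmf snd K) - ent K"
    using ent_integral[OF fK] ent_integral[of "map_pmf fst K"] ent_integral[of "map_pmf snd K"] fK by simp
  finally show ?thesis .
qed


lemma set_runh':
  "\<forall>i w1 w2 t s. f i w1 w2 t s < B \<Longrightarrow> h \<in> set_pmf (runh d1 d2 f w1 w2 tA n) \<Longrightarrow>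
     length h = n \<and> (\<forall>s\<in>set h. fst (snd s) = fst s \<and> snd (snd s) < B)"
  by (rule set_runh) auto

lemma set_Qd:
  assumes fb: "\<forall>i w1 w2 t s. f i w1 w2 t s < B"
    and h: "(w1, w2, h) \<in> set_pmf (Qd d1 d2 n f PA PW1 PW2)"
  shows "w1 \<in> set_pmf PW1 \<and> w2 \<in> set_pmf PW2 \<and> length h = n \<and> (\<forall>s\<in>set h. fst (snd s) = fst s \<and> snd (snd s) < B)"
proof -
  from h obtain tA where "w1 \<in> set_pmf PW1" "w2 \<in> set_pmf PW2" "h \<in> set_pmf (runh d1 d2 f w1 w2 tA n)"
    unfolding Qd_def ctxP_def by (auto simp: set_bind_pmf)
  then show ?thesis using set_runh'[OF fb] by blast
qed

lemma unif_Qd: "map_pmf (\<lambda>(w1,w2,h). (w1,w2)) (Qd d1 d2 n f PA PW1 PW2) = pair_pmf PW1 PW2"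
  unfolding Qd_def ctxP_def pair_pmf_def
  by (simp add: map_bind_pmf bind_assoc_pmf bind_return_pmf map_pmf_comp bind_map_pmf case_prod_unfold map_pmf_def)

lemma Qd_core:
  assumes fb: "\<forall>i w1 w2 t s. f i w1 w2 t s < B"
    and M1: "finite M1" "M1 \<noteq> {}" and M2: "finite M2" "M2 \<noteq> {}"
    and d: "0 < d1" "d1 < 1" "0 < d2" "d2 < 1"
  shows "core (Qd d1 d2 n f PA (pmf_of_set M1) (pmf_of_set M2)) d1 d2 n B M1 M2"
proof (unfold_locales)
  let ?Q = "Qd d1 d2 n f PA (pmf_of_set M1) (pmf_of_set M2)"
  have sub: "set_pmf ?Q \<subseteq> M1 \<times> M2 \<times> {h. set h \<subseteq> ((UNIV :: state set) \<times> (UNIV :: state set) \<times> {..<B}) \<and> length h = n}"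
  proof
    fix \<omega> assume w: "\<omega> \<in> set_pmf ?Q"
    obtain w1 w2 h where om: "\<omega> = (w1,w2,h)" by (cases \<omega>) auto
    have "w1 \<in> set_pmf (pmf_of_set M1) \<and> w2 \<in> set_pmf (pmf_of_set M2) \<and> length h = n \<and> (\<forall>s\<in>set h. fst (snd s) = fst s \<and> snd (snd s) < B)"
      using set_Qd[OF fb, of w1 w2 h] w om by blast
    then have "w1 \<in> M1" "w2 \<in> M2" "length h = n" "set h \<subseteq> ((UNIV :: state set) \<times> (UNIV :: state set) \<times> {..<B})"
      using M1 M2 by auto
    then show "\<omega> \<in> M1 \<times> M2 \<times> {h. set h \<subseteq> ((UNIV :: state set) \<times> (UNIV :: state set) \<times> {..<B}) \<and> length h = n}"
      using om by simp
  qed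
  have "finite {h. set h \<subseteq> ((UNIV :: state set) \<times> (UNIV :: state set) \<times> {..<B}) \<and> length h = n}"
    by (rule finite_lists_length_eq) (intro finite_cartesian_product, auto)
  then have "finite (M1 \<times> M2 \<times> {h. set h \<subseteq> ((UNIV :: state set) \<times> (UNIV :: state set) \<times> {..<B}) \<and> length h = n})"
    using M1 M2 by (intro finite_cartesian_product)
  then show "finite (set_pmf ?Q)" using sub finite_subset by blast
  show "\<And>w1 w2 h. (w1, w2, h) \<in> set_pmf ?Q \<Longrightarrow> length h = n \<and> (\<forall>s\<in>set h. snd (snd s) < B)"
    using set_Qd[OF fb] by blast
  show "map_pmf (\<lambda>(w1,w2,h). (w1,w2)) ?Q = pair_pmf (pmf_of_set M1) (pmf_of_set M2)" by (rule unif_Qd)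
  show "\<And>i. i < n \<Longrightarrow> map_pmf (\<lambda>(w1,w2,h). (((w1,w2), take i h, snd (snd (h!i))), fst (h!i))) ?Q
        = pair_pmf (map_pmf (\<lambda>(w1,w2,h). ((w1,w2), take i h, snd (snd (h!i)))) ?Q) (Est d1 d2)"
    by (rule Qd_slot)
qed (rule M1 M2 d)+

definition sw :: "slot \<Rightarrow> slot" where
  "sw s = (prod.swap (fst s), prod.swap (fst (snd s)), snd (snd s))"

definition sig :: "nat \<times> nat \<times> slot list \<Rightarrow> nat \<times> nat \<times> slot list" where
  "sig \<omega> = (fst (snd \<omega>), fst \<omega>, map sw (snd (snd \<omega>)))"

lemma Est_swap: "map_pmf prod.swap (Est d1 d2) = Est d2 d1"
  unfolding Est_def by (subst pair_commute_pmf) (simp add: map_pmf_comp case_prod_unfold)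

lemma core_swap:
  assumes "core Q d1 d2 n B M1 M2"
  shows "core (map_pmf sig Q) d2 d1 n B M2 M1"
proof -
  interpret core Q d1 d2 n B M1 M2 by (rule assms)
  show ?thesis
  proof (unfold_locales)
    show "finite (set_pmf (map_pmf sig Q))" using finQ by simp
    show "\<And>w1 w2 h. (w1, w2, h) \<in> set_pmf (map_pmf sig Q) \<Longrightarrow> length h = n \<and> (\<forall>s\<in>set h. snd (snd s) < B)"
    proof -
      fix w1 w2 h assume "(w1, w2, h) \<in> set_pmf (map_pmf sig Q)"
      then obtain a b h0 where "(a,b,h0) \<in> set_pmf Q" "h = map sw h0" by (auto simp: sig_def)
      then show "length h = n \<and> (\<forall>s\<in>set h. snd (snd s) < B)" using suppQ by (auto simp: sw_def)
    qed
    have "map_pmf (\<lambda>(w1,w2,h). (w1,w2)) (map_pmf sig Q) = map_pmf prod.swap (map_pmf (\<lambda>(w1,w2,h). (w1,w2)) Q)"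
      by (simp add: map_pmf_comp sig_def case_prod_unfold)
    also have "\<dots> = pair_pmf (pmf_of_set M2) (pmf_of_set M1)"
      unfolding unif by (subst (2) pair_commute_pmf) (intro map_pmf_cong refl, auto)
    finally show "map_pmf (\<lambda>(w1,w2,h). (w1,w2)) (map_pmf sig Q) = pair_pmf (pmf_of_set M2) (pmf_of_set M1)" .
    fix i assume i: "i < n"
    define phi where "phi = (\<lambda>(w::nat\<times>nat, h0::slot list, x::nat). (prod.swap w, map sw h0, x))"
    have eqA: "(\<lambda>(w1,w2,h). ((w1,w2), take i h, snd (snd (h!i)))) (sig \<omega>)
          = phi ((\<lambda>(w1,w2,h). ((w1,w2), take i h, snd (snd (h!i)))) \<omega>)" if w: "\<omega> \<in> set_pmf Q" for \<omega>
    proof -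
      obtain w1 w2 h where om: "\<omega> = (w1,w2,h)" by (cases \<omega>) auto
      have "length h = n" using suppQ[of w1 w2 h] w om by simp
      then show ?thesis using i om by (simp add: sig_def phi_def take_map sw_def)
    qed
    have eqB: "(\<lambda>(w1,w2,h). (((w1,w2), take i h, snd (snd (h!i))), fst (h!i))) (sig \<omega>)
          = (\<lambda>(a,e). (phi a, prod.swap e)) ((\<lambda>(w1,w2,h). (((w1,w2), take i h, snd (snd (h!i))), fst (h!i))) \<omega>)"
      if w: "\<omega> \<in> set_pmf Q" for \<omega>
    proof -
      obtain w1 w2 h where om: "\<omega> = (w1,w2,h)" by (cases \<omega>) auto
      have "length h = n" using suppQ[of w1 w2 h] w om by simp
      then show ?thesis using i om by (simp add: sig_def phi_def take_map sw_def)
    qed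
    have A: "map_pmf (\<lambda>(w1,w2,h). ((w1,w2), take i h, snd (snd (h!i)))) (map_pmf sig Q)
       = map_pmf phi (map_pmf (\<lambda>(w1,w2,h). ((w1,w2), take i h, snd (snd (h!i)))) Q)"
      unfolding map_pmf_comp by (rule map_pmf_cong[OF refl]) (rule eqA)
    have "map_pmf (\<lambda>(w1,w2,h). (((w1,w2), take i h, snd (snd (h!i))), fst (h!i))) (map_pmf sig Q)
       = map_pmf (\<lambda>(a,e). (phi a, prod.swap e)) (map_pmf (\<lambda>(w1,w2,h). (((w1,w2), take i h, snd (snd (h!i))), fst (h!i))) Q)"
      unfolding map_pmf_comp by (rule map_pmf_cong[OF refl]) (rule eqB)
    also have "\<dots> = map_pmf (\<lambda>(a,e). (phi a, prod.swap e)) (pair_pmf (map_pmf (\<lambda>(w1,w2,h). ((w1,w2), take i h, snd (snd (h!i)))) Q) (Est d1 d2))"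
      unfolding slot[OF i] ..
    also have "\<dots> = pair_pmf (map_pmf phi (map_pmf (\<lambda>(w1,w2,h). ((w1,w2), take i h, snd (snd (h!i)))) Q)) (map_pmf prod.swap (Est d1 d2))"
      by (rule map_pair)
    also have "\<dots> = pair_pmf (map_pmf (\<lambda>(w1,w2,h). ((w1,w2), take i h, snd (snd (h!i)))) (map_pmf sig Q)) (Est d2 d1)"
      unfolding A Est_swap ..
    finally show "map_pmf (\<lambda>(w1,w2,h). (((w1,w2), take i h, snd (snd (h!i))), fst (h!i))) (map_pmf sig Q)
       = pair_pmf (map_pmf (\<lambda>(w1,w2,h). ((w1,w2), take i h, snd (snd (h!i)))) (map_pmf sig Q)) (Est d2 d1)" .
  qed (rule M1 M2 d)+
qed


lemma obs1_oc: "obs1 = oc fst" by (rule ext) (simp add: obs1_def oc_def)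
lemma obs2_oc: "obs2 = oc snd" by (rule ext) (simp add: obs2_def oc_def)
lemma true_state_fst: "true_state = fst" by (rule ext) (simp add: true_state_def)

lemma integral_le_const_pmf:
  fixes g :: "'a \<Rightarrow> real"
  assumes "finite (set_pmf M)" "\<And>x. x \<in> set_pmf M \<Longrightarrow> g x \<le> c"
  shows "(\<integral>x. g x \<partial>measure_pmf M) \<le> c"
proof -
  have "(\<integral>x. g x \<partial>measure_pmf M) = (\<Sum>x\<in>set_pmf M. g x * pmf M x)"
    by (rule integral_measure_pmf_real) (use assms in auto)
  also have "\<dots> \<le> (\<Sum>x\<in>set_pmf M. c * pmf M x)"
    by (intro sum_mono mult_right_mono assms) auto
  also have "\<dots> = c" using assms by (simp add: sum_distrib_left[symmetric] sum_pmf_eq_1)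
  finally show ?thesis .
qed

lemma channel_exp_bind:
  "channel_exp d1 d2 n f PA PB PC PW1 PW2 aB aC
   = PW1 \<bind> (\<lambda>w1. PW2 \<bind> (\<lambda>w2. channel_exp d1 d2 n f PA PB PC (return_pmf w1) (return_pmf w2) aB aC))"
  unfolding channel_exp_def by (simp add: bind_return_pmf)

lemma err_avg:
  assumes M1: "finite M1" "M1 \<noteq> {}" and M2: "finite M2" "M2 \<noteq> {}"
    and each: "\<And>w1 w2. w1 \<in> M1 \<Longrightarrow> w2 \<in> M2 \<Longrightarrow>
       measure_pmf.prob (channel_exp d1 d2 n f PA PB PC (return_pmf w1) (return_pmf w2) aB aC) A < eps"
  shows "measure_pmf.prob (channel_exp d1 d2 n f PA PB PC (pmf_of_set M1) (pmf_of_set M2) aB aC) A \<le> eps"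
proof -
  have "measure_pmf.prob (channel_exp d1 d2 n f PA PB PC (pmf_of_set M1) (pmf_of_set M2) aB aC) A
     = (\<integral>w1. (\<integral>w2. measure_pmf.prob (channel_exp d1 d2 n f PA PB PC (return_pmf w1) (return_pmf w2) aB aC) A
           \<partial>measure_pmf (pmf_of_set M2)) \<partial>measure_pmf (pmf_of_set M1))"
  proof -
    have m: "\<And>D. measure_pmf.prob D A = pmf (map_pmf (\<lambda>\<omega>. \<omega> \<in> A) D) True"
      by (simp add: pmf_map vimage_def)
    show ?thesis unfolding m by (subst channel_exp_bind) (simp add: map_bind_pmf pmf_bind)
  qed
  also have "\<dots> \<le> eps"
  proof (rule integral_le_const_pmf)
    show "finite (set_pmf (pmf_of_set M1))" using M1 by simp
    fix w1 assume w1: "w1 \<in> set_pmf (pmf_of_set M1)"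
    show "(\<integral>w2. measure_pmf.prob (channel_exp d1 d2 n f PA PB PC (return_pmf w1) (return_pmf w2) aB aC) A
           \<partial>measure_pmf (pmf_of_set M2)) \<le> eps"
    proof (rule integral_le_const_pmf)
      show "finite (set_pmf (pmf_of_set M2))" using M2 by simp
      fix w2 assume w2: "w2 \<in> set_pmf (pmf_of_set M2)"
      show "measure_pmf.prob (channel_exp d1 d2 n f PA PB PC (return_pmf w1) (return_pmf w2) aB aC) A \<le> eps"
        using each[of w1 w2] w1 w2 M1 M2 by simp
    qed
  qed
  finally show ?thesis .
qed


lemma MI_inj:
  fixes X :: "'a \<Rightarrow> 'b::countable" and Y :: "'a \<Rightarrow> 'c::countable" and g :: "'c \<Rightarrow> 'd::countable"
  assumes gi: "inj g"
  shows "MI P X (\<lambda>\<omega>. g (Y \<omega>)) = MI P X Y"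
proof -
  let ?J = "map_pmf (\<lambda>\<omega>. (X \<omega>, Y \<omega>)) P"
  define phi where "phi = (\<lambda>(x::'b, y::'c). (x, g y))"
  have phii: "inj phi" unfolding phi_def using gi by (auto simp: inj_def)
  have J': "map_pmf (\<lambda>\<omega>. (X \<omega>, g (Y \<omega>))) P = map_pmf phi ?J" by (simp add: map_pmf_comp phi_def)
  have Yg: "map_pmf (\<lambda>\<omega>. g (Y \<omega>)) P = map_pmf g (map_pmf Y P)" by (simp add: map_pmf_comp)
  have "MI P X (\<lambda>\<omega>. g (Y \<omega>)) = (\<integral>z. log 2 (pmf (map_pmf phi ?J) (phi z) / (pmf (map_pmf X P) (fst (phi z)) * pmf (map_pmf g (map_pmf Y P)) (snd (phi z)))) \<partial>measure_pmf ?J)"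
    unfolding MI_pmf J' Yg by simp
  also have "\<dots> = (\<integral>z. log 2 (pmf ?J z / (pmf (map_pmf X P) (fst z) * pmf (map_pmf Y P) (snd z))) \<partial>measure_pmf ?J)"
  proof -
    have fp: "fst (phi z) = fst z" "snd (phi z) = g (snd z)" for z unfolding phi_def by (simp_all add: case_prod_unfold)
    show ?thesis by (simp only: pmf_map_inj'[OF phii] pmf_map_inj'[OF gi] fp)
  qed
  also have "\<dots> = MI P X Y" unfolding MI_pmf ..
  finally show ?thesis .
qed


lemma fano_Q:
  fixes W :: "'o \<Rightarrow> nat" and Z :: "'o \<Rightarrow> 'z" and phi :: "'z \<Rightarrow> nat"
  assumes finQ: "finite (set_pmf Q)" and WM: "\<And>\<omega>. \<omega> \<in> set_pmf Q \<Longrightarrow> W \<omega> \<in> M"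
    and M: "finite M" "M \<noteq> {}"
    and err: "measure_pmf.prob Q {\<omega>. phi (Z \<omega>) \<noteq> W \<omega>} \<le> eps" and e: "0 < eps" "eps < 1"
  shows "HH Q (\<lambda>\<omega>. (W \<omega>, Z \<omega>)) - HH Q Z \<le> - log 2 (1 - eps) - eps * log 2 eps + eps * log 2 (card M)"
proof -
  have "HH Q (\<lambda>\<omega>. (W \<omega>, Z \<omega>)) - HH Q Z \<le> HH Q (\<lambda>\<omega>. (W \<omega>, phi (Z \<omega>))) - HH Q (\<lambda>\<omega>. phi (Z \<omega>))"
    by (rule cond_mono[OF finQ, where g=phi]) simp
  also have "\<dots> \<le> - log 2 (1 - eps) - eps * log 2 eps + eps * log 2 (card M)"
    by (rule fano[OF finQ M WM err e])
  finally show ?thesis .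
qed

lemma card_msgs: "card (msgs q L N) = q ^ (L * N)" unfolding msgs_def by simp

lemma msgs_ne: "q > 0 \<Longrightarrow> msgs q L N \<noteq> {}"
proof -
  assume "q > 0"
  then have "0 \<in> msgs q L N" unfolding msgs_def by simp
  then show ?thesis by blast
qed

lemma log_card_msgs: "q > 0 \<Longrightarrow> log 2 (card (msgs q L N)) = real N * real L * log 2 q"
  unfolding card_msgs by (simp add: log_nat_power of_nat_power)

lemma leak_lemma:
  fixes P :: "outcome pmf" and Q :: "(nat \<times> nat \<times> slot list) pmf"
    and Wf :: "outcome \<Rightarrow> nat" and Yf :: "outcome \<Rightarrow> obs list" and Tf :: "outcome \<Rightarrow> nat"
    and w :: "nat \<times> nat \<times> slot list \<Rightarrow> nat" and y :: "slot list \<Rightarrow> obs list"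
  assumes J: "map_pmf (\<lambda>\<omega>. ((W1_of \<omega>, W2_of \<omega>, hist_of \<omega>), Tf \<omega>)) P = pair_pmf Q PT"
    and Wf: "\<And>\<omega>. Wf \<omega> = w (W1_of \<omega>, W2_of \<omega>, hist_of \<omega>)"
    and Yf: "\<And>\<omega>. Yf \<omega> = y (hist_of \<omega>)"
    and finQ: "finite (set_pmf Q)"
  shows "MI P Wf (\<lambda>\<omega>. (Yf \<omega>, S_of \<omega>, Tf \<omega>))
     = HH Q w + HH Q (\<lambda>(w1,w2,h). (y h, map fst h)) - HH Q (\<lambda>\<omega>. (w \<omega>, y (snd (snd \<omega>)), map fst (snd (snd \<omega>))))"
proof -
  define g where "g = (\<lambda>((a::obs list, b::state list), c::nat). (a, b, c))"
  have gi: "inj g" unfolding g_def by (auto simp: inj_def)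
  have "MI P Wf (\<lambda>\<omega>. (Yf \<omega>, S_of \<omega>, Tf \<omega>)) = MI P Wf (\<lambda>\<omega>. g ((Yf \<omega>, S_of \<omega>), Tf \<omega>))"
    by (simp add: g_def)
  also have "\<dots> = MI P Wf (\<lambda>\<omega>. ((Yf \<omega>, S_of \<omega>), Tf \<omega>))" by (rule MI_inj[OF gi])
  also have "\<dots> = ent (map_pmf fst (map_pmf (\<lambda>\<omega>. (w \<omega>, y (snd (snd \<omega>)), map fst (snd (snd \<omega>)))) Q))
      + ent (map_pmf snd (map_pmf (\<lambda>\<omega>. (w \<omega>, y (snd (snd \<omega>)), map fst (snd (snd \<omega>)))) Q))
      - ent (map_pmf (\<lambda>\<omega>. (w \<omega>, y (snd (snd \<omega>)), map fst (snd (snd \<omega>)))) Q)"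
  proof (rule MI_indep)
    have "map_pmf (\<lambda>\<omega>. ((Wf \<omega>, Yf \<omega>, S_of \<omega>), Tf \<omega>)) P
       = map_pmf (\<lambda>(a, t). ((\<lambda>\<omega>. (w \<omega>, y (snd (snd \<omega>)), map fst (snd (snd \<omega>)))) a, id t))
           (map_pmf (\<lambda>\<omega>. ((W1_of \<omega>, W2_of \<omega>, hist_of \<omega>), Tf \<omega>)) P)"
      by (simp add: map_pmf_comp Wf Yf S_of_def true_state_fst)
    also have "\<dots> = pair_pmf (map_pmf (\<lambda>\<omega>. (w \<omega>, y (snd (snd \<omega>)), map fst (snd (snd \<omega>)))) Q) (map_pmf id PT)"
      unfolding J by (rule map_pair)
    finally show "map_pmf (\<lambda>\<omega>. ((Wf \<omega>, Yf \<omega>, S_of \<omega>), Tf \<omega>)) P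
       = pair_pmf (map_pmf (\<lambda>\<omega>. (w \<omega>, y (snd (snd \<omega>)), map fst (snd (snd \<omega>)))) Q) PT" by simp
    show "finite (set_pmf (map_pmf (\<lambda>\<omega>. (w \<omega>, y (snd (snd \<omega>)), map fst (snd (snd \<omega>)))) Q))" using finQ by simp
  qed
  also have "\<dots> = HH Q w + HH Q (\<lambda>(w1,w2,h). (y h, map fst h)) - HH Q (\<lambda>\<omega>. (w \<omega>, y (snd (snd \<omega>)), map fst (snd (snd \<omega>))))"
    unfolding HH_def by (simp add: map_pmf_comp case_prod_unfold)
  finally show ?thesis .
qed

lemma sig_Y1: "(\<lambda>(w1,w2,h). (w1, map (oc fst) h)) \<circ> sig = (\<lambda>(w1,w2,h). (w2, map (oc snd) h))"
  by (auto simp: sig_def sw_def oc_def fun_eq_iff)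
lemma sig_Y1b: "(\<lambda>(w1,w2,h). map (oc fst) h) \<circ> sig = (\<lambda>(w1,w2,h). map (oc snd) h)"
  by (auto simp: sig_def sw_def oc_def fun_eq_iff)
lemma sig_Y2: "(\<lambda>(w1,w2,h). (w2, map (oc snd) h)) \<circ> sig = (\<lambda>(w1,w2,h). (w1, map (oc fst) h))"
  by (auto simp: sig_def sw_def oc_def fun_eq_iff)
lemma sig_Y2b: "(\<lambda>(w1,w2,h). map (oc snd) h) \<circ> sig = (\<lambda>(w1,w2,h). map (oc fst) h)"
  by (auto simp: sig_def sw_def oc_def fun_eq_iff)
lemma sig_L1: "(\<lambda>(w1,w2,h). (map (oc snd) h, map fst h)) \<circ> sig = (\<lambda>(w1,w2,h). (map (oc fst) h, map prod.swap (map fst h)))"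
  by (auto simp: sig_def sw_def oc_def fun_eq_iff)
lemma sig_L2: "(\<lambda>(w1,w2,h). (w1, map (oc snd) h, map fst h)) \<circ> sig = (\<lambda>(w1,w2,h). (w2, map (oc fst) h, map prod.swap (map fst h)))"
  by (auto simp: sig_def sw_def oc_def fun_eq_iff)

lemma HH_sig: "HH (map_pmf sig Q) g = HH Q (g \<circ> sig)"
  unfolding HH_def by (simp add: map_pmf_comp comp_def)

lemma inj_map_swap: "inj (map prod.swap :: state list \<Rightarrow> state list)"
  by (rule inj_mapI) (auto simp: inj_def)

lemma HH_unswap1: "HH Q (\<lambda>(w1,w2,h). (map (oc fst) h, map prod.swap (map fst h))) = HH Q (\<lambda>(w1,w2,h). (map (oc fst) h, map fst h))"
proof -
  have "HH Q (\<lambda>(w1,w2,h). (map (oc fst) h, map prod.swap (map fst h)))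
     = HH Q (\<lambda>\<omega>. (\<lambda>(a,b). (a, map prod.swap b)) ((\<lambda>(w1,w2,h). (map (oc fst) h, map fst h)) \<omega>))"
    by (simp add: case_prod_unfold)
  also have "\<dots> = HH Q (\<lambda>(w1,w2,h). (map (oc fst) h, map fst h))"
    by (rule HH_inj) (use inj_map_swap in \<open>auto simp: inj_def\<close>)
  finally show ?thesis .
qed

lemma HH_unswap2: "HH Q (\<lambda>(w1,w2,h). (w2, map (oc fst) h, map prod.swap (map fst h))) = HH Q (\<lambda>(w1,w2,h). (w2, map (oc fst) h, map fst h))"
proof -
  have "HH Q (\<lambda>(w1,w2,h). (w2, map (oc fst) h, map prod.swap (map fst h)))
     = HH Q (\<lambda>\<omega>. (\<lambda>(c,a,b). (c, a, map prod.swap b)) ((\<lambda>(w1,w2,h). (w2, map (oc fst) h, map fst h)) \<omega>))"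
    by (simp add: case_prod_unfold)
  also have "\<dots> = HH Q (\<lambda>(w1,w2,h). (w2, map (oc fst) h, map fst h))"
    by (rule HH_inj) (use inj_map_swap in \<open>auto simp: inj_def\<close>)
  finally show ?thesis .
qed

lemma scheme_bound:
  fixes q L N1 N2 n :: nat and d1 d2 eps :: real
  assumes q: "q > 0" and d: "0 < d1" "d1 < 1" "0 < d2" "d2 < 1" and e: "0 < eps" "eps < 1"
    and sec: "secure_hbc q L d1 d2 n eps N1 N2 f phi1 phi2 PA PB PC"
  defines "T1 \<equiv> real N1 * real L * log 2 q" and "T2 \<equiv> real N2 * real L * log 2 q"
    and "F1 \<equiv> - log 2 (1 - eps) - eps * log 2 eps + eps * (real N1 * real L * log 2 q)"
    and "F2 \<equiv> - log 2 (1 - eps) - eps * log 2 eps + eps * (real N2 * real L * log 2 q)"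
  shows "T1/(1-d1) + T2/(1-d1*d2) - T1/(1-d1*d2) + T1/(d2*(1-d1))
           \<le> n * (L * log 2 q) + F1/(1-d1) + F2/(1-d1*d2) + (eps + F1 + F2)/(d2*(1-d1))
       \<and> T2/(1-d2) + T1/(1-d2*d1) - T2/(1-d2*d1) + T2/(d1*(1-d2))
           \<le> n * (L * log 2 q) + F2/(1-d2) + F1/(1-d2*d1) + (eps + F2 + F1)/(d1*(1-d2))"
proof -
  define M1 where "M1 = msgs q L N1"
  define M2 where "M2 = msgs q L N2"
  define P where "P = channel_exp d1 d2 n f PA PB PC (pmf_of_set M1) (pmf_of_set M2) honest_ack honest_ack"
  define Q where "Q = Qd d1 d2 n f PA (pmf_of_set M1) (pmf_of_set M2)"
  define B where "B = q ^ L"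
  have M1f: "finite M1" "M1 \<noteq> {}" unfolding M1_def using msgs_ne[OF q] by (auto simp: msgs_def)
  have M2f: "finite M2" "M2 \<noteq> {}" unfolding M2_def using msgs_ne[OF q] by (auto simp: msgs_def)
  have T1: "log 2 (card M1) = T1" unfolding M1_def T1_def by (rule log_card_msgs[OF q])
  have T2: "log 2 (card M2) = T2" unfolding M2_def T2_def by (rule log_card_msgs[OF q])
  have lB: "log 2 B = L * log 2 q" unfolding B_def using q by (simp add: log_nat_power of_nat_power)
  have Bp: "B > 0" unfolding B_def using q by simp
  have sch: "is_scheme q L d1 d2 n eps N1 N2 f phi1 phi2 PA PB PC"
    and mi1: "MI P W1_of (\<lambda>\<omega>. (Y2_of \<omega>, S_of \<omega>, thC_of \<omega>)) < eps"
    and mi2: "MI P W2_of (\<lambda>\<omega>. (Y1_of \<omega>, S_of \<omega>, thB_of \<omega>)) < eps"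
    using sec unfolding secure_hbc_def P_def M1_def M2_def Let_def by auto
  have fb: "\<forall>i w1 w2 t s. f i w1 w2 t s < B" using sch unfolding is_scheme_def B_def by blast
  have rel: "\<And>w1 w2. w1 \<in> M1 \<Longrightarrow> w2 \<in> M2 \<Longrightarrow>
     measure_pmf.prob (channel_exp d1 d2 n f PA PB PC (return_pmf w1) (return_pmf w2) honest_ack honest_ack) {\<omega>. phi1 (Y1_of \<omega>) \<noteq> W1_of \<omega>} < eps
   \<and> measure_pmf.prob (channel_exp d1 d2 n f PA PB PC (return_pmf w1) (return_pmf w2) honest_ack honest_ack) {\<omega>. phi2 (Y2_of \<omega>) \<noteq> W2_of \<omega>} < eps"
    using sch unfolding is_scheme_def M1_def M2_def Let_def by blast
  have core: "core Q d1 d2 n B M1 M2" unfolding Q_def by (rule Qd_core[OF fb M1f M2f d])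
  interpret c1: core Q d1 d2 n B M1 M2 by (rule core)
  have PQ: "map_pmf (\<lambda>\<omega>. (W1_of \<omega>, W2_of \<omega>, hist_of \<omega>)) P = Q" unfolding P_def Q_def by (rule exp_Q)
  have inM: "fst \<omega> \<in> M1 \<and> fst (snd \<omega>) \<in> M2" if "\<omega> \<in> set_pmf Q" for \<omega>
  proof -
    obtain w1 w2 h where om: "\<omega> = (w1,w2,h)" by (cases \<omega>) auto
    show ?thesis using set_Qd[OF fb, of w1 w2 h d1 d2 n PA "pmf_of_set M1" "pmf_of_set M2"] that om M1f M2f
      unfolding Q_def by auto
  qed
  have err1: "measure_pmf.prob Q {\<omega>. phi1 (map (oc fst) (snd (snd \<omega>))) \<noteq> fst \<omega>} \<le> eps"
  proof -
    have "measure_pmf.prob Q {\<omega>. phi1 (map (oc fst) (snd (snd \<omega>))) \<noteq> fst \<omega>}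
        = measure_pmf.prob P {\<omega>. phi1 (Y1_of \<omega>) \<noteq> W1_of \<omega>}"
      unfolding PQ[symmetric] by (simp add: vimage_def Y1_of_def obs1_oc)
    also have "\<dots> \<le> eps" unfolding P_def by (rule err_avg[OF M1f M2f]) (use rel in blast)
    finally show ?thesis .
  qed
  have err2: "measure_pmf.prob Q {\<omega>. phi2 (map (oc snd) (snd (snd \<omega>))) \<noteq> fst (snd \<omega>)} \<le> eps"
  proof -
    have "measure_pmf.prob Q {\<omega>. phi2 (map (oc snd) (snd (snd \<omega>))) \<noteq> fst (snd \<omega>)}
        = measure_pmf.prob P {\<omega>. phi2 (Y2_of \<omega>) \<noteq> W2_of \<omega>}"
      unfolding PQ[symmetric] by (simp add: vimage_def Y2_of_def obs2_oc)
    also have "\<dots> \<le> eps" unfolding P_def by (rule err_avg[OF M1f M2f]) (use rel in blast)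
    finally show ?thesis .
  qed
  have fa1: "HH Q (\<lambda>(w1,w2,h). (w1, map (oc fst) h)) - HH Q (\<lambda>(w1,w2,h). map (oc fst) h) \<le> F1"
    using fano_Q[OF c1.finQ, of fst M1 phi1 "\<lambda>\<omega>. map (oc fst) (snd (snd \<omega>))", OF _ M1f err1 e] inM
    unfolding F1_def using T1 unfolding T1_def by (simp add: case_prod_unfold)
  have fa2: "HH Q (\<lambda>(w1,w2,h). (w2, map (oc snd) h)) - HH Q (\<lambda>(w1,w2,h). map (oc snd) h) \<le> F2"
    using fano_Q[OF c1.finQ, of "\<lambda>\<omega>. fst (snd \<omega>)" M2 phi2 "\<lambda>\<omega>. map (oc snd) (snd (snd \<omega>))", OF _ M2f err2 e] inM
    unfolding F2_def using T2 unfolding T2_def by (simp add: case_prod_unfold)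
  have lk1: "log 2 (card M1) + HH Q (\<lambda>(w1,w2,h). (map (oc snd) h, map fst h))
            - HH Q (\<lambda>(w1,w2,h). (w1, map (oc snd) h, map fst h)) \<le> eps"
  proof -
    have "MI P W1_of (\<lambda>\<omega>. (Y2_of \<omega>, S_of \<omega>, thC_of \<omega>))
       = HH Q (\<lambda>(w1,w2,h). w1) + HH Q (\<lambda>(w1,w2,h). (map (oc snd) h, map fst h))
         - HH Q (\<lambda>\<omega>. ((\<lambda>(w1,w2,h). w1) \<omega>, map (oc snd) (snd (snd \<omega>)), map fst (snd (snd \<omega>))))"
      by (rule leak_lemma[where PT=PC], simp only: P_def Q_def exp_C, simp, simp add: Y2_of_def obs2_oc, rule c1.finQ)
    then show ?thesis using mi1 c1.HW1 by (simp add: case_prod_unfold)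
  qed
  have lk2: "log 2 (card M2) + HH Q (\<lambda>(w1,w2,h). (map (oc fst) h, map fst h))
            - HH Q (\<lambda>(w1,w2,h). (w2, map (oc fst) h, map fst h)) \<le> eps"
  proof -
    have "MI P W2_of (\<lambda>\<omega>. (Y1_of \<omega>, S_of \<omega>, thB_of \<omega>))
       = HH Q (\<lambda>(w1,w2,h). w2) + HH Q (\<lambda>(w1,w2,h). (map (oc fst) h, map fst h))
         - HH Q (\<lambda>\<omega>. ((\<lambda>(w1,w2,h). w2) \<omega>, map (oc fst) (snd (snd \<omega>)), map fst (snd (snd \<omega>))))"
      by (rule leak_lemma[where PT=PB], simp only: P_def Q_def exp_B, simp, simp add: Y1_of_def obs1_oc, rule c1.finQ)
    then show ?thesis using mi2 c1.HW2 by (simp add: case_prod_unfold)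
  qed
  have ineq1: "T1/(1-d1) + T2/(1-d1*d2) - T1/(1-d1*d2) + T1/(d2*(1-d1))
           \<le> n * (L * log 2 q) + F1/(1-d1) + F2/(1-d1*d2) + (eps + F1 + F2)/(d2*(1-d1))"
    using c1.main_ineq[OF Bp fa1 fa2 lk1] unfolding T1 T2 lB by (simp add: algebra_simps)
  have core2: "core (map_pmf sig Q) d2 d1 n B M2 M1" by (rule core_swap[OF core])
  interpret c2: core "map_pmf sig Q" d2 d1 n B M2 M1 by (rule core2)
  have fa1': "HH (map_pmf sig Q) (\<lambda>(w1,w2,h). (w1, map (oc fst) h)) - HH (map_pmf sig Q) (\<lambda>(w1,w2,h). map (oc fst) h) \<le> F2"
    unfolding HH_sig sig_Y1 sig_Y1b by (rule fa2)
  have fa2': "HH (map_pmf sig Q) (\<lambda>(w1,w2,h). (w2, map (oc snd) h)) - HH (map_pmf sig Q) (\<lambda>(w1,w2,h). map (oc snd) h) \<le> F1"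
    unfolding HH_sig sig_Y2 sig_Y2b by (rule fa1)
  have lk2': "log 2 (card M2) + HH (map_pmf sig Q) (\<lambda>(w1,w2,h). (map (oc snd) h, map fst h))
            - HH (map_pmf sig Q) (\<lambda>(w1,w2,h). (w1, map (oc snd) h, map fst h)) \<le> eps"
    unfolding HH_sig sig_L1 sig_L2 HH_unswap1 HH_unswap2 by (rule lk2)
  have ineq2: "T2/(1-d2) + T1/(1-d2*d1) - T2/(1-d2*d1) + T2/(d1*(1-d2))
           \<le> n * (L * log 2 q) + F2/(1-d2) + F1/(1-d2*d1) + (eps + F2 + F1)/(d1*(1-d2))"
    using c2.main_ineq[OF Bp fa1' fa2' lk2'] unfolding T1 T2 lB by (simp add: algebra_simps)
  show ?thesis using ineq1 ineq2 by blast
qed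


definition aeps :: "real \<Rightarrow> real" where "aeps e = - log 2 (1 - e) - e * log 2 e"

lemma aeps_tendsto: "(aeps \<longlongrightarrow> 0) (at_right 0)"
  unfolding aeps_def by real_asymp

lemma aeps_nonneg: "0 < e \<Longrightarrow> e < 1 \<Longrightarrow> aeps e \<ge> 0"
proof -
  assume e: "0 < e" "e < 1"
  have "log 2 (1 - e) \<le> 0" using e by simp
  moreover have "log 2 e \<le> 0" using e by simp
  then have "e * log 2 e \<le> 0" using e by (simp add: mult_nonneg_nonpos)
  ultimately show ?thesis unfolding aeps_def by simp
qed

lemma limit_generic:
  fixes A1 A2 c K R1 R2 :: real
  assumes A: "A1 \<ge> 1" "A2 \<ge> 1" and c: "c \<ge> 0" and K: "K \<ge> 0"
    and H: "\<And>eps eps'. 0 < eps \<Longrightarrow> eps < 1 \<Longrightarrow> eps' > 0 \<Longrightarrow>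
       \<exists>T1 T2 n. n \<ge> 1 \<and> T1 \<ge> 0 \<and> T2 \<ge> 0 \<and>
         A1 * T1 + A2 * T2 \<le> n * K + c * (2 * aeps eps + eps) + c * eps * (T1 + T2) \<and>
         R1 - eps' < T1 / n \<and> R2 - eps' < T2 / n"
  shows "A1 * R1 + A2 * R2 \<le> K"
proof -
  define \<delta> where "\<delta> = (\<lambda>eps. c * (2 * aeps eps + eps) + 2 * c * eps * (K + c * (2 * aeps eps + eps)))"
  define e0 where "e0 = min (1/2) (1 / (2 * c + 1))"
  have e0p: "e0 > 0" unfolding e0_def using c by simp
  have main: "A1 * R1 + A2 * R2 \<le> K + \<delta> eps" if e: "0 < eps" "eps < e0" for eps
  proof (rule field_le_epsilon)
    fix t :: real assume t: "t > 0"
    define eps' where "eps' = t / (A1 + A2)"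
    have ep: "eps' > 0" unfolding eps'_def using t A by simp
    have e1: "eps < 1" using e unfolding e0_def by simp
    obtain T1 T2 n where n: "n \<ge> 1" and T: "T1 \<ge> 0" "T2 \<ge> 0"
      and ineq: "A1 * T1 + A2 * T2 \<le> n * K + c * (2 * aeps eps + eps) + c * eps * (T1 + T2)"
      and r1: "R1 - eps' < T1 / n" and r2: "R2 - eps' < T2 / n"
      using H[OF e(1) e1 ep] by blast
    define G where "G = c * (2 * aeps eps + eps)"
    have G0: "G \<ge> 0" unfolding G_def using c aeps_nonneg[OF e(1) e1] e by simp
    have ce: "c * eps \<le> 1/2"
    proof -
      have "eps \<le> 1 / (2 * c + 1)" using e unfolding e0_def by simp
      then have "c * eps \<le> c * (1 / (2 * c + 1))" using c by (rule mult_left_mono)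
      also have "\<dots> \<le> 1/2" using c by (simp add: field_simps)
      finally show ?thesis .
    qed
    have "T1 + T2 \<le> A1 * T1 + A2 * T2"
      using A T by (smt (verit, best) mult_le_cancel_right1 mult_nonneg_nonneg)
    then have "(T1 + T2) - c * eps * (T1 + T2) \<le> n * K + G" using ineq unfolding G_def by simp
    moreover have "(T1 + T2) - c * eps * (T1 + T2) \<ge> (T1 + T2) / 2"
    proof -
      have "c * eps * (T1 + T2) \<le> 1/2 * (T1 + T2)" using ce T by (intro mult_right_mono) auto
      then show ?thesis by simp
    qed
    ultimately have sumT: "T1 + T2 \<le> 2 * (n * K + G)" by simp
    have "c * eps * (T1 + T2) \<le> c * eps * (2 * (n * K + G))"
      using sumT c e by (intro mult_left_mono) auto
    then have "A1 * T1 + A2 * T2 \<le> n * K + G + c * eps * (2 * (n * K + G))" using ineq unfolding G_def by simp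
    also have "\<dots> \<le> n * (K + G + 2 * c * eps * (K + G))"
    proof -
      have gn: "G \<le> n * G" using mult_right_mono[of 1 n G] n G0 by simp
      moreover have "c * eps * (2 * (n * K + G)) \<le> n * (2 * c * eps * (K + G))"
      proof -
        have "n * K + G \<le> n * (K + G)" using gn by (simp add: distrib_left)
        then have "c * eps * (2 * (n * K + G)) \<le> c * eps * (2 * (n * (K + G)))"
          using c e by (intro mult_left_mono) auto
        then show ?thesis by (simp add: algebra_simps)
      qed
      ultimately show ?thesis by (simp add: algebra_simps)
    qed
    finally have "(A1 * T1 + A2 * T2) / n \<le> K + G + 2 * c * eps * (K + G)" using n by (simp add: divide_le_eq mult.commute)
    then have tt: "A1 * (T1 / n) + A2 * (T2 / n) \<le> \<delta> eps + K" unfolding \<delta>_def G_def by (simp add: add_divide_distrib algebra_simps)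
    have "A1 * R1 + A2 * R2 \<le> A1 * (T1 / n + eps') + A2 * (T2 / n + eps')"
      using r1 r2 A by (intro add_mono mult_left_mono) auto
    also have "\<dots> = A1 * (T1 / n) + A2 * (T2 / n) + (A1 + A2) * eps'" by (simp add: algebra_simps)
    also have "(A1 + A2) * eps' = t" unfolding eps'_def using A by simp
    finally show "A1 * R1 + A2 * R2 \<le> K + \<delta> eps + t" using tt by simp
  qed
  have lim: "((\<lambda>eps. K + \<delta> eps) \<longlongrightarrow> K + 0) (at_right 0)"
    unfolding \<delta>_def by (intro tendsto_intros aeps_tendsto) (auto intro!: tendsto_eq_intros aeps_tendsto)
  have ev: "eventually (\<lambda>eps. A1 * R1 + A2 * R2 \<le> K + \<delta> eps) (at_right 0)"
    unfolding eventually_at_right_field using e0p main by blast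
  show ?thesis using tendsto_le[OF _ lim tendsto_const ev] by simp
qed


lemma one_side:
  fixes d1 d2 K R1 R2 :: real
  assumes d: "0 < d1" "d1 < 1" "0 < d2" "d2 < 1" and K: "K \<ge> 0"
    and H: "\<And>eps eps'. 0 < eps \<Longrightarrow> eps < 1 \<Longrightarrow> eps' > 0 \<Longrightarrow>
       \<exists>T1 T2 n. n \<ge> 1 \<and> T1 \<ge> 0 \<and> T2 \<ge> 0 \<and>
         T1/(1-d1) + T2/(1-d1*d2) - T1/(1-d1*d2) + T1/(d2*(1-d1))
           \<le> n * K + (aeps eps + eps * T1)/(1-d1) + (aeps eps + eps * T2)/(1-d1*d2)
              + (eps + (aeps eps + eps * T1) + (aeps eps + eps * T2))/(d2*(1-d1)) \<and>
         R1 - eps' < T1 / n \<and> R2 - eps' < T2 / n"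
  shows "R1 * (1 - d2) / (d2 * (1 - d1) * (1 - d1 * d2)) + R1 / (1 - d1) + R2 / (1 - d1 * d2) \<le> K"
proof -
  define p1 where "p1 = 1 - d1"
  define po where "po = 1 - d1 * d2"
  define k where "k = d2 * (1 - d1)"
  have p1p: "p1 > 0" unfolding p1_def using d by simp
  have "d1 * d2 < d1 * 1" using d by (intro mult_strict_left_mono) auto
  then have pop: "po > 0" unfolding po_def using d by linarith
  have kp: "k > 0" unfolding k_def using d by simp
  have kpo: "k \<le> po" unfolding k_def po_def using d by (simp add: algebra_simps)
  define A1 where "A1 = 1/p1 - 1/po + 1/k"
  define A2 where "A2 = 1/po"
  define c where "c = 1/p1 + 1/po + 1/k"
  have pole: "po \<le> 1" unfolding po_def using d by simp
  have A2: "A2 \<ge> 1" unfolding A2_def using pop pole by simp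
  have "1/po \<le> 1/k" using kp kpo by (simp add: frac_le)
  moreover have "1/p1 \<ge> 1" using p1p unfolding p1_def using d by simp
  ultimately have A1: "A1 \<ge> 1" unfolding A1_def by simp
  have c0: "c \<ge> 0" unfolding c_def using p1p pop kp by simp
  have "A1 * R1 + A2 * R2 \<le> K"
  proof (rule limit_generic[OF A1 A2 c0 K])
    fix eps eps' :: real assume e: "0 < eps" "eps < 1" "eps' > 0"
    obtain T1 T2 n where n: "n \<ge> 1" and T: "T1 \<ge> 0" "T2 \<ge> 0"
      and ineq: "T1/(1-d1) + T2/(1-d1*d2) - T1/(1-d1*d2) + T1/(d2*(1-d1))
           \<le> n * K + (aeps eps + eps * T1)/(1-d1) + (aeps eps + eps * T2)/(1-d1*d2)
              + (eps + (aeps eps + eps * T1) + (aeps eps + eps * T2))/(d2*(1-d1))"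
      and r: "R1 - eps' < T1 / n" "R2 - eps' < T2 / n"
      using H[OF e] by blast
    define F1 where "F1 = aeps eps + eps * T1"
    define F2 where "F2 = aeps eps + eps * T2"
    have a0: "aeps eps \<ge> 0" using aeps_nonneg e by simp
    have F1p: "F1 \<ge> 0" unfolding F1_def using a0 e T by simp
    have F2p: "F2 \<ge> 0" unfolding F2_def using a0 e T by simp
    have lhs: "T1/(1-d1) + T2/(1-d1*d2) - T1/(1-d1*d2) + T1/(d2*(1-d1)) = A1 * T1 + A2 * T2"
      unfolding A1_def A2_def p1_def po_def k_def by (simp add: algebra_simps add_divide_distrib diff_divide_distrib)
    have "F1/p1 + F2/po + (eps + F1 + F2)/k \<le> c * (F1 + F2 + eps)"
    proof -
      have "F1/p1 + F2/po + (eps + F1 + F2)/k = (1/p1 + 1/k) * F1 + (1/po + 1/k) * F2 + (1/k) * eps"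
        using kp p1p pop by (simp add: field_simps)
      also have "\<dots> \<le> c * F1 + c * F2 + c * eps"
        unfolding c_def using F1p F2p e p1p pop kp
        by (intro add_mono mult_right_mono) auto
      finally show ?thesis by (simp add: algebra_simps add_divide_distrib)
    qed
    note cb = this
    have i2: "A1 * T1 + A2 * T2 \<le> n * K + F1/p1 + F2/po + (eps + F1 + F2)/k"
      using ineq[unfolded lhs] unfolding F1_def F2_def p1_def po_def k_def .
    have eqc: "c * (F1 + F2 + eps) = c * (2 * aeps eps + eps) + c * eps * (T1 + T2)"
      unfolding F1_def F2_def by (simp add: algebra_simps)
    have "A1 * T1 + A2 * T2 \<le> n * K + c * (2 * aeps eps + eps) + c * eps * (T1 + T2)"
      using i2 cb eqc by linarith
    then show "\<exists>T1 T2 n. n \<ge> 1 \<and> T1 \<ge> 0 \<and> T2 \<ge> 0 \<and>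
         A1 * T1 + A2 * T2 \<le> n * K + c * (2 * aeps eps + eps) + c * eps * (T1 + T2) \<and>
         R1 - eps' < T1 / n \<and> R2 - eps' < T2 / n"
      using n T r by blast
  qed
  moreover have "R1 * (1 - d2) / (d2 * (1 - d1) * (1 - d1 * d2)) + R1 / (1 - d1) + R2 / (1 - d1 * d2) = A1 * R1 + A2 * R2"
  proof -
    have e1: "1/k - 1/po = (po - k) / (k * po)" using kp pop by (simp add: field_simps)
    have e2: "po - k = 1 - d2" unfolding po_def k_def by (simp add: algebra_simps)
    have "1/k - 1/po = (1 - d2) / (d2 * (1 - d1) * (1 - d1 * d2))"
      unfolding e1 e2 by (simp add: k_def po_def)
    then have A1e: "A1 = 1/p1 + (1 - d2) / (d2 * (1 - d1) * (1 - d1 * d2))" unfolding A1_def by linarith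
    show ?thesis unfolding A1e A2_def p1_def po_def by (simp add: algebra_simps)
  qed
  ultimately show ?thesis by simp
qed

lemma MI_cong:
  fixes X :: "'a \<Rightarrow> 'b::countable" and Y Y' :: "'a \<Rightarrow> 'c::countable"
  assumes "\<And>\<omega>. \<omega> \<in> set_pmf P \<Longrightarrow> Y \<omega> = Y' \<omega>"
  shows "MI P X Y = MI P X Y'"
proof -
  have 1: "map_pmf (\<lambda>\<omega>. (X \<omega>, Y \<omega>)) P = map_pmf (\<lambda>\<omega>. (X \<omega>, Y' \<omega>)) P"
    by (rule map_pmf_cong) (auto simp: assms)
  have 2: "map_pmf Y P = map_pmf Y' P" by (rule map_pmf_cong) (auto simp: assms)
  show ?thesis unfolding MI_pmf 1 2 ..
qed

lemma Sstar_eq: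
  assumes fb: "\<forall>i w1 w2 t s. f i w1 w2 t s < B"
    and w: "\<omega> \<in> set_pmf (channel_exp d1 d2 n f PA PB PC PW1 PW2 honest_ack honest_ack)"
  shows "Sstar_of \<omega> = S_of \<omega>"
proof -
  have "(W1_of \<omega>, W2_of \<omega>, hist_of \<omega>) \<in> set_pmf (map_pmf (\<lambda>\<omega>. (W1_of \<omega>, W2_of \<omega>, hist_of \<omega>)) (channel_exp d1 d2 n f PA PB PC PW1 PW2 honest_ack honest_ack))"
    using w by simp
  then have "(W1_of \<omega>, W2_of \<omega>, hist_of \<omega>) \<in> set_pmf (Qd d1 d2 n f PA PW1 PW2)"
    unfolding exp_Q .
  then have "\<forall>s\<in>set (hist_of \<omega>). fst (snd s) = fst s" using set_Qd[OF fb] by blast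
  then show ?thesis unfolding Sstar_of_def S_of_def rep_state_def true_state_def by simp
qed

lemma mal_hbc:
  assumes q: "q > 0" and sm: "secure_mal q L d1 d2 n eps N1 N2 f phi1 phi2 PA PB PC"
  shows "secure_hbc q L d1 d2 n eps N1 N2 f phi1 phi2 PA PB PC"
proof -
  define M1 where "M1 = msgs q L N1"
  define M2 where "M2 = msgs q L N2"
  define P where "P = channel_exp d1 d2 n f PA PB PC (pmf_of_set M1) (pmf_of_set M2) honest_ack honest_ack"
  have M1f: "finite M1" "M1 \<noteq> {}" unfolding M1_def using msgs_ne[OF q] by (auto simp: msgs_def)
  have M2f: "finite M2" "M2 \<noteq> {}" unfolding M2_def using msgs_ne[OF q] by (auto simp: msgs_def)
  have sch: "is_scheme q L d1 d2 n eps N1 N2 f phi1 phi2 PA PB PC" using sm unfolding secure_mal_def by blast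
  have fb: "\<forall>i w1 w2 t s. f i w1 w2 t s < q ^ L" using sch unfolding is_scheme_def by blast
  have s1: "set_pmf (pmf_of_set M1) \<subseteq> msgs q L N1" using M1f unfolding M1_def by simp
  have s2: "set_pmf (pmf_of_set M2) \<subseteq> msgs q L N2" using M2f unfolding M2_def by simp
  have m1: "MI P W1_of (\<lambda>\<omega>. (Y2_of \<omega>, Sstar_of \<omega>, thC_of \<omega>)) < eps"
    using sm s1 unfolding secure_mal_def P_def M2_def Let_def by blast
  have m2: "MI P W2_of (\<lambda>\<omega>. (Y1_of \<omega>, Sstar_of \<omega>, thB_of \<omega>)) < eps"
    using sm s2 unfolding secure_mal_def P_def M1_def Let_def by blast
  have e1: "MI P W1_of (\<lambda>\<omega>. (Y2_of \<omega>, Sstar_of \<omega>, thC_of \<omega>)) = MI P W1_of (\<lambda>\<omega>. (Y2_of \<omega>, S_of \<omega>, thC_of \<omega>))"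
    by (rule MI_cong) (use Sstar_eq[OF fb] in \<open>simp add: P_def\<close>)
  have e2: "MI P W2_of (\<lambda>\<omega>. (Y1_of \<omega>, Sstar_of \<omega>, thB_of \<omega>)) = MI P W2_of (\<lambda>\<omega>. (Y1_of \<omega>, S_of \<omega>, thB_of \<omega>))"
    by (rule MI_cong) (use Sstar_eq[OF fb] in \<open>simp add: P_def\<close>)
  show ?thesis unfolding secure_hbc_def Let_def
    using sch m1 m2 e1 e2 unfolding P_def M1_def M2_def by simp
qed

lemma mal_ach: "q > 0 \<Longrightarrow> achievable secure_mal q L d1 d2 R \<Longrightarrow> achievable secure_hbc q L d1 d2 R"
  unfolding achievable_def using mal_hbc by metis

theorem theorem3:
  fixes q L :: nat and d1 d2 :: real
  assumes "primepow q" and "L > 0"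
    and "0 < d1" and "d1 < 1" and "0 < d2" and "d2 < 1"
  shows "\<forall>(R1, R2) \<in> cap_region q L d1 d2 \<union> cap_region_hbc q L d1 d2.
     R1 * (1 - d2) / (d2 * (1 - d1) * (1 - d1 * d2)) + R1 / (1 - d1) + R2 / (1 - d1 * d2)
       \<le> real L * log 2 (real q) \<and>
     R2 * (1 - d1) / (d1 * (1 - d2) * (1 - d1 * d2)) + R1 / (1 - d1 * d2) + R2 / (1 - d2)
       \<le> real L * log 2 (real q)"
proof (intro ballI, clarify)
  fix R1 R2 assume R: "(R1, R2) \<in> cap_region q L d1 d2 \<union> cap_region_hbc q L d1 d2"
  have q1: "q > 1" using primepow_gt_Suc_0[OF assms(1)] by simp
  then have q0: "q > 0" by simp
  have d: "0 < d1" "d1 < 1" "0 < d2" "d2 < 1" using assms by auto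
  have ach: "achievable secure_hbc q L d1 d2 (R1, R2)"
    using R mal_ach[OF q0] unfolding cap_region_def cap_region_hbc_def by blast
  define K where "K = real L * log 2 (real q)"
  have K0: "K \<ge> 0" unfolding K_def using q1 by simp
  have lq: "log 2 (real q) \<ge> 0" using q1 by simp
  have H: "\<exists>N1 N2 n f phi1 phi2 PA PB PC. n > 0 \<and> secure_hbc q L d1 d2 n eps N1 N2 f phi1 phi2 PA PB PC \<and>
        R1 - eps' < real N1 * real L * log 2 (real q) / real n \<and>
        R2 - eps' < real N2 * real L * log 2 (real q) / real n" if "eps > 0" "eps' > 0" for eps eps'
    using ach that unfolding achievable_def by simp
  have side1: "R1 * (1 - d2) / (d2 * (1 - d1) * (1 - d1 * d2)) + R1 / (1 - d1) + R2 / (1 - d1 * d2) \<le> K"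
  proof (rule one_side[OF d K0])
    fix eps eps' :: real assume e: "0 < eps" "eps < 1" "eps' > 0"
    obtain N1 N2 n f phi1 phi2 PA PB PC where n: "n > 0"
      and sec: "secure_hbc q L d1 d2 n eps N1 N2 f phi1 phi2 PA PB PC"
      and r1: "R1 - eps' < real N1 * real L * log 2 (real q) / real n"
      and r2: "R2 - eps' < real N2 * real L * log 2 (real q) / real n"
      using H[OF e(1) e(3)] by blast
    note sb = conjunct1[OF scheme_bound[OF q0 d e(1) e(2) sec]]
    show "\<exists>T1 T2 n. n \<ge> 1 \<and> T1 \<ge> 0 \<and> T2 \<ge> 0 \<and>
         T1/(1-d1) + T2/(1-d1*d2) - T1/(1-d1*d2) + T1/(d2*(1-d1))
           \<le> n * K + (aeps eps + eps * T1)/(1-d1) + (aeps eps + eps * T2)/(1-d1*d2)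
              + (eps + (aeps eps + eps * T1) + (aeps eps + eps * T2))/(d2*(1-d1)) \<and>
         R1 - eps' < T1 / n \<and> R2 - eps' < T2 / n"
      apply (rule exI[of _ "real N1 * real L * log 2 (real q)"])
      apply (rule exI[of _ "real N2 * real L * log 2 (real q)"])
      apply (rule exI[of _ "real n"])
      using n r1 r2 lq sb unfolding K_def aeps_def by (simp add: algebra_simps)
  qed
  have side2: "R2 * (1 - d1) / (d1 * (1 - d2) * (1 - d2 * d1)) + R2 / (1 - d2) + R1 / (1 - d2 * d1) \<le> K"
  proof (rule one_side[of d2 d1])
    show "0 < d2" "d2 < 1" "0 < d1" "d1 < 1" "K \<ge> 0" using d K0 by auto
    fix eps eps' :: real assume e: "0 < eps" "eps < 1" "eps' > 0"
    obtain N1 N2 n f phi1 phi2 PA PB PC where n: "n > 0"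
      and sec: "secure_hbc q L d1 d2 n eps N1 N2 f phi1 phi2 PA PB PC"
      and r1: "R1 - eps' < real N1 * real L * log 2 (real q) / real n"
      and r2: "R2 - eps' < real N2 * real L * log 2 (real q) / real n"
      using H[OF e(1) e(3)] by blast
    note sb = conjunct2[OF scheme_bound[OF q0 d e(1) e(2) sec]]
    show "\<exists>T1 T2 n. n \<ge> 1 \<and> T1 \<ge> 0 \<and> T2 \<ge> 0 \<and>
         T1/(1-d2) + T2/(1-d2*d1) - T1/(1-d2*d1) + T1/(d1*(1-d2))
           \<le> n * K + (aeps eps + eps * T1)/(1-d2) + (aeps eps + eps * T2)/(1-d2*d1)
              + (eps + (aeps eps + eps * T1) + (aeps eps + eps * T2))/(d1*(1-d2)) \<and>
         R2 - eps' < T1 / n \<and> R1 - eps' < T2 / n"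
      apply (rule exI[of _ "real N2 * real L * log 2 (real q)"])
      apply (rule exI[of _ "real N1 * real L * log 2 (real q)"])
      apply (rule exI[of _ "real n"])
      using n r1 r2 lq sb unfolding K_def aeps_def by (simp add: algebra_simps)
  qed
  show "R1 * (1 - d2) / (d2 * (1 - d1) * (1 - d1 * d2)) + R1 / (1 - d1) + R2 / (1 - d1 * d2)
       \<le> real L * log 2 (real q) \<and>
     R2 * (1 - d1) / (d1 * (1 - d2) * (1 - d1 * d2)) + R1 / (1 - d1 * d2) + R2 / (1 - d2)
       \<le> real L * log 2 (real q)"
    using side1 side2 unfolding K_def by (simp add: mult.commute add.commute add.left_commute)
qed


end
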